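(* Let $k$ be a positive integer and $f\in\mathcal R^0_{[1]}(\mathbb R^2)$. Then for every integer $m\ge 2k$, the function $f^m$ is $k$-flat.
   Context: For $k\in\mathbb N\cup\{\infty\}$, $\mathcal R^k(\mathbb R^2)$ denotes the ring of functions $f:\mathbb R^2\to\mathbb R$ of class $C^k$ that coincide with $p/q$ ($p,q$ polynomials, $q$ nonvanishing there) on some nonempty Zariski open set. For $l\in\mathbb N$: consider compositions $\pi:M\to\mathbb R^2$ of successive blowings-up $M_i\to M_{i-1}$ ($M_0=\mathbb R^2$), each centred at points. An infinitely near point of order $j$ is a sequence $a_0\in M_0,\dots,a_j\in M_j$ where $M_i$ is the blowing-up of $M_{i-1}$ at $a_{i-1}$ and $a_i$ maps to $a_{i-1}$; the number of stages of $\pi$ is the maximal order of infinitely near points in $M$. $\mathcal R^k_{[l]}(\mathbb R^2)$ is the set of $f\in\mathcal R^k(\mathbb R^2)$ for which there is such a $\pi$ with at most $l$ stages such that $f\circ\pi$ is regular on $M$. A function $g:\mathbb R^2\to\mathbb R$ is $k$-flat at a point $a$ if $g$ is of class $C^k$ at $a$ and all partial derivatives of $g$ of order $\le k$ vanish at $a$; $g$ is $k$-flat if it is $k$-flat at every point of its zero set. *)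

theory Defs
  imports "HOL-Analysis.Analysis"
begin

definition polyfun2 :: "(real \<times> real \<Rightarrow> real) \<Rightarrow> bool" where
  "polyfun2 p \<longleftrightarrow> (\<exists>n::nat. \<exists>c::nat \<Rightarrow> nat \<Rightarrow> real.
      \<forall>x y. p (x, y) = (\<Sum>i\<le>n. \<Sum>j\<le>n. c i j * x ^ i * y ^ j))"

definition regular_at :: "(real \<times> real \<Rightarrow> real) \<Rightarrow> real \<times> real \<Rightarrow> bool" where
  "regular_at g z \<longleftrightarrow> (\<exists>p q U. polyfun2 p \<and> polyfun2 q \<and> open U \<and> z \<in> U \<and> q z \<noteq> 0 \<and>
      (\<forall>w\<in>U. g w = p w / q w))"

text \<open>f coincides with p/q (q nonvanishing there) on a nonempty Zariski open set.
  Every nonempty Zariski open subset of R^2 is of the form {g \<noteq> 0} with g a polynomial.\<close>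
definition rational_fun :: "(real \<times> real \<Rightarrow> real) \<Rightarrow> bool" where
  "rational_fun f \<longleftrightarrow> (\<exists>g p q. polyfun2 g \<and> polyfun2 p \<and> polyfun2 q \<and> (\<exists>z. g z \<noteq> 0) \<and>
      (\<forall>z. g z \<noteq> 0 \<longrightarrow> q z \<noteq> 0 \<and> f z = p z / q z))"

definition regulous0 :: "(real \<times> real \<Rightarrow> real) \<Rightarrow> bool" where
  "regulous0 f \<longleftrightarrow> continuous_on UNIV f \<and> rational_fun f"

text \<open>R^0_[1](R^2): there is a finite set C of points such that f composed with the
  blowing-up of R^2 at the points of C (at most one stage) is regular.  Regularity on
  the blown-up surface is checked away from C directly, and over each a in C in the two
  standard affine charts (u,v) \<mapsto> (a1+u, a2+uv) and (u,v) \<mapsto> (a1+uv, a2+v) at the points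
  of the exceptional divisor (u = 0, resp. v = 0).\<close>
definition regulous0_1 :: "(real \<times> real \<Rightarrow> real) \<Rightarrow> bool" where
  "regulous0_1 f \<longleftrightarrow> regulous0 f \<and>
     (\<exists>C. finite C \<and>
        (\<forall>z. z \<notin> C \<longrightarrow> regular_at f z) \<and>
        (\<forall>a\<in>C.
           (\<forall>v. regular_at (\<lambda>(u, w). f (fst a + u, snd a + u * w)) (0, v)) \<and>
           (\<forall>u. regular_at (\<lambda>(w, v). f (fst a + w * v, snd a + v)) (u, 0))))"

text \<open>Partial derivatives: index 0 is d/dx, any other index is d/dy.\<close>
definition pd :: "nat \<Rightarrow> (real \<times> real \<Rightarrow> real) \<Rightarrow> real \<times> real \<Rightarrow> real" where
  "pd i g = (\<lambda>(x, y). if i = 0 then deriv (\<lambda>t. g (t, y)) x else deriv (\<lambda>t. g (x, t)) y)"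

definition pdiff_at :: "nat \<Rightarrow> (real \<times> real \<Rightarrow> real) \<Rightarrow> real \<times> real \<Rightarrow> bool" where
  "pdiff_at i g z = (if i = 0 then (\<lambda>t. g (t, snd z)) differentiable (at (fst z))
                     else (\<lambda>t. g (fst z, t)) differentiable (at (snd z)))"

fun Ck_on :: "nat \<Rightarrow> (real \<times> real) set \<Rightarrow> (real \<times> real \<Rightarrow> real) \<Rightarrow> bool" where
  "Ck_on 0 U g = continuous_on U g"
| "Ck_on (Suc k) U g = (continuous_on U g \<and>
     (\<forall>i\<in>{0,1}. (\<forall>z\<in>U. pdiff_at i g z) \<and> Ck_on k U (pd i g)))"

fun pds :: "nat list \<Rightarrow> (real \<times> real \<Rightarrow> real) \<Rightarrow> real \<times> real \<Rightarrow> real" where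
  "pds [] g = g"
| "pds (i # is) g = pd i (pds is g)"

definition kflat_at :: "nat \<Rightarrow> (real \<times> real \<Rightarrow> real) \<Rightarrow> real \<times> real \<Rightarrow> bool" where
  "kflat_at k g a \<longleftrightarrow> (\<exists>U. open U \<and> a \<in> U \<and> Ck_on k U g) \<and>
     (\<forall>is. length is \<le> k \<and> set is \<subseteq> {0, 1} \<longrightarrow> pds is g a = 0)"

definition kflat :: "nat \<Rightarrow> (real \<times> real \<Rightarrow> real) \<Rightarrow> bool" where
  "kflat k g \<longleftrightarrow> (\<forall>a. g a = 0 \<longrightarrow> kflat_at k g a)"

end

theory Submission
  imports Defs
begin

lemma pd_def2: "pd i g z = (if i = 0 then deriv (\<lambda>t. g (t, snd z)) (fst z) else deriv (\<lambda>t. g (fst z, t)) (snd z))"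
  by (cases z) (simp add: pd_def)

lemma pd_Suc: "i \<noteq> 0 \<Longrightarrow> pd i = pd 1"
  by (auto simp: pd_def fun_eq_iff)

lemma pdiff_def2: "i \<noteq> 0 \<Longrightarrow> pdiff_at i = pdiff_at 1"
  by (auto simp: pdiff_at_def fun_eq_iff)

lemma pds_append: "pds (is @ [i]) g = pds is (pd i g)"
  by (induction "is") auto

lemma frechet_partials:
  assumes "(g has_derivative (\<lambda>v. fst v * A + snd v * B)) (at z)"
  shows "((\<lambda>t. g (t, snd z)) has_real_derivative A) (at (fst z))"
    and "((\<lambda>t. g (fst z, t)) has_real_derivative B) (at (snd z))"
proof -
  have z: "(fst z, snd z) = z" by simp
  have 1: "((\<lambda>t. (t, snd z)) has_derivative (\<lambda>h. (h, 0))) (at (fst z))"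
    by (auto intro!: derivative_eq_intros)
  have "((g \<circ> (\<lambda>t. (t, snd z))) has_derivative ((\<lambda>v. fst v * A + snd v * B) \<circ> (\<lambda>h. (h, 0)))) (at (fst z))"
    by (rule diff_chain_at[OF 1]) (simp add: z assms)
  then show "((\<lambda>t. g (t, snd z)) has_real_derivative A) (at (fst z))"
    by (simp add: has_field_derivative_def o_def mult.commute[of _ A] mult.commute[of _ B])
  have 2: "((\<lambda>t. (fst z, t)) has_derivative (\<lambda>h. (0, h))) (at (snd z))"
    by (auto intro!: derivative_eq_intros)
  have "((g \<circ> (\<lambda>t. (fst z, t))) has_derivative ((\<lambda>v. fst v * A + snd v * B) \<circ> (\<lambda>h. (0, h)))) (at (snd z))"
    by (rule diff_chain_at[OF 2]) (simp add: z assms)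
  then show "((\<lambda>t. g (fst z, t)) has_real_derivative B) (at (snd z))"
    by (simp add: has_field_derivative_def o_def mult.commute[of _ A] mult.commute[of _ B])
qed

lemma frechet_pd:
  assumes "(g has_derivative (\<lambda>v. fst v * A + snd v * B)) (at z)"
  shows "pd i g z = (if i = 0 then A else B)" "pdiff_at i g z"
  using frechet_partials[OF assms]
  by (auto simp: pd_def2 pdiff_at_def DERIV_imp_deriv has_field_derivative_def intro: differentiableI)

lemma open_slice1:
  assumes "open W" shows "open {t::real. (t, c) \<in> W}"
proof -
  have c: "continuous_on UNIV (\<lambda>t::real. (t, c))" by (rule continuous_on_Pair[OF continuous_on_id continuous_on_const])
  have "open ((\<lambda>t. (t, c)) -` W)" by (rule continuous_imp_open_vimage[OF c open_UNIV assms]) simp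
  then show ?thesis unfolding vimage_def .
qed

lemma open_slice2:
  assumes "open W" shows "open {t::real. (c, t) \<in> W}"
proof -
  have c: "continuous_on UNIV (\<lambda>t::real. (c, t))" by (rule continuous_on_Pair[OF continuous_on_const continuous_on_id])
  have "open ((\<lambda>t. (c, t)) -` W)" by (rule continuous_imp_open_vimage[OF c open_UNIV assms]) simp
  then show ?thesis unfolding vimage_def .
qed

lemma pd_local:
  assumes "open W" "z \<in> W" "\<And>w. w \<in> W \<Longrightarrow> g w = h w"
  shows "pd i g z = pd i h z"
proof -
  have e1: "eventually (\<lambda>t. g (t, snd z) = h (t, snd z)) (nhds (fst z))"
    unfolding eventually_nhds using open_slice1[OF assms(1), of "snd z"] assms(2,3)
    by (intro exI[of _ "{t. (t, snd z) \<in> W}"]) auto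
  have e2: "eventually (\<lambda>t. g (fst z, t) = h (fst z, t)) (nhds (snd z))"
    unfolding eventually_nhds using open_slice2[OF assms(1), of "fst z"] assms(2,3)
    by (intro exI[of _ "{t. (fst z, t) \<in> W}"]) auto
  show ?thesis unfolding pd_def2 using deriv_cong_ev[OF e1 refl] deriv_cong_ev[OF e2 refl] by simp
qed

lemma pds_local:
  assumes "open W" "\<And>w. w \<in> W \<Longrightarrow> g w = h w" "z \<in> W"
  shows "pds is g z = pds is h z"
  using assms(3)
proof (induction "is" arbitrary: z)
  case Nil then show ?case using assms by simp
next
  case (Cons i "is")
  have "pd i (pds is g) z = pd i (pds is h) z"
    by (rule pd_local[OF assms(1) Cons.prems]) (rule Cons.IH)
  then show ?case by simp
qed


inductive poly2 :: "(real \<times> real \<Rightarrow> real) \<Rightarrow> bool" where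
  pconst: "poly2 (\<lambda>z. c)"
| pfst: "poly2 fst"
| psnd: "poly2 snd"
| padd: "poly2 p \<Longrightarrow> poly2 q \<Longrightarrow> poly2 (\<lambda>z. p z + q z)"
| pmult: "poly2 p \<Longrightarrow> poly2 q \<Longrightarrow> poly2 (\<lambda>z. p z * q z)"

lemma poly2_sum: "finite S \<Longrightarrow> (\<And>i. i \<in> S \<Longrightarrow> poly2 (f i)) \<Longrightarrow> poly2 (\<lambda>z. \<Sum>i\<in>S. f i z)"
proof (induction S rule: finite_induct)
  case empty then show ?case using poly2.pconst[of 0] by simp
next
  case (insert x F)
  have "poly2 (\<lambda>z. f x z + (\<Sum>i\<in>F. f i z))"
    by (rule poly2.padd) (use insert in auto)
  then show ?case using insert by simp
qed

lemma poly2_pow: "poly2 p \<Longrightarrow> poly2 (\<lambda>z. p z ^ n)"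
proof (induction n)
  case 0 then show ?case using poly2.pconst[of 1] by simp
next
  case (Suc n) then show ?case using poly2.pmult[of p "\<lambda>z. p z ^ n"] by simp
qed

lemma polyfun2_poly2: "polyfun2 p \<Longrightarrow> poly2 p"
proof -
  assume "polyfun2 p"
  then obtain n c where h: "\<forall>x y. p (x,y) = (\<Sum>i\<le>n. \<Sum>j\<le>n. c i j * x^i * y^j)" unfolding polyfun2_def by blast
  have eq: "p = (\<lambda>z. \<Sum>i\<le>n. \<Sum>j\<le>n. c i j * fst z ^ i * snd z ^ j)"
  proof
    fix z show "p z = (\<Sum>i\<le>n. \<Sum>j\<le>n. c i j * fst z ^ i * snd z ^ j)" using h[rule_format, of "fst z" "snd z"] by simp
  qed
  have "poly2 (\<lambda>z. \<Sum>i\<le>n. \<Sum>j\<le>n. c i j * fst z ^ i * snd z ^ j)"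
  proof (rule poly2_sum[OF finite_atMost])
    fix i show "poly2 (\<lambda>z. \<Sum>j\<le>n. c i j * fst z ^ i * snd z ^ j)"
    proof (rule poly2_sum[OF finite_atMost])
      fix j show "poly2 (\<lambda>z. c i j * fst z ^ i * snd z ^ j)"
        by (intro poly2.pmult poly2.pconst poly2_pow poly2.pfst poly2.psnd)
    qed
  qed
  then show ?thesis using eq by simp
qed

lemma poly2_diff: "poly2 p \<Longrightarrow> poly2 q \<Longrightarrow> poly2 (\<lambda>z. p z - q z)"
  using poly2.padd[of p "\<lambda>z. (-1) * q z"] poly2.pmult[OF poly2.pconst[of "-1"], of q] by simp

lemma poly2_swap: "poly2 p \<Longrightarrow> poly2 (\<lambda>z. p (snd z, fst z))"
  by (induction rule: poly2.induct) (auto intro: poly2.intros)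

lemma poly2_deriv:
  "poly2 p \<Longrightarrow> \<exists>pu pw. poly2 pu \<and> poly2 pw \<and> (\<forall>z. (p has_derivative (\<lambda>v. fst v * pu z + snd v * pw z)) (at z))"
proof (induction rule: poly2.induct)
  case (pconst c)
  have "((\<lambda>z. c) has_derivative (\<lambda>v. fst v * 0 + snd v * 0)) (at z)" for z :: "real \<times> real"
    by (rule has_derivative_eq_rhs[OF has_derivative_const]) simp
  then show ?case using poly2.pconst[of 0] by blast
next
  case pfst
  have "(fst has_derivative (\<lambda>v. fst v * 1 + snd v * 0)) (at z)" for z :: "real \<times> real"
    by (rule has_derivative_eq_rhs[OF has_derivative_fst[OF has_derivative_ident]]) simp
  then show ?case using poly2.pconst[of 0] poly2.pconst[of 1] by blast
next
  case psnd
  have "(snd has_derivative (\<lambda>v. fst v * 0 + snd v * 1)) (at z)" for z :: "real \<times> real"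
    by (rule has_derivative_eq_rhs[OF has_derivative_snd[OF has_derivative_ident]]) simp
  then show ?case using poly2.pconst[of 0] poly2.pconst[of 1] by blast
next
  case (padd p q)
  then obtain pu pw qu qw where h: "poly2 pu" "poly2 pw" "poly2 qu" "poly2 qw"
    "\<And>z. (p has_derivative (\<lambda>v. fst v * pu z + snd v * pw z)) (at z)"
    "\<And>z. (q has_derivative (\<lambda>v. fst v * qu z + snd v * qw z)) (at z)" by blast
  have "((\<lambda>z. p z + q z) has_derivative (\<lambda>v. fst v * (pu z + qu z) + snd v * (pw z + qw z))) (at z)" for z
    by (rule has_derivative_eq_rhs[OF has_derivative_add[OF h(5) h(6)]]) (simp add: fun_eq_iff algebra_simps)
  then show ?case using poly2.padd[OF h(1) h(3)] poly2.padd[OF h(2) h(4)] by blast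
next
  case (pmult p q)
  then obtain pu pw qu qw where h: "poly2 pu" "poly2 pw" "poly2 qu" "poly2 qw"
    "\<And>z. (p has_derivative (\<lambda>v. fst v * pu z + snd v * pw z)) (at z)"
    "\<And>z. (q has_derivative (\<lambda>v. fst v * qu z + snd v * qw z)) (at z)" by blast
  have "((\<lambda>z. p z * q z) has_derivative (\<lambda>v. fst v * (p z * qu z + pu z * q z) + snd v * (p z * qw z + pw z * q z))) (at z)" for z
    by (rule has_derivative_eq_rhs[OF has_derivative_mult[OF h(5) h(6)]]) (simp add: fun_eq_iff algebra_simps)
  moreover have "poly2 (\<lambda>z. p z * qu z + pu z * q z)" "poly2 (\<lambda>z. p z * qw z + pw z * q z)"
    using pmult h by (auto intro!: poly2.padd poly2.pmult)
  ultimately show ?case by blast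
qed

lemma poly2_continuous: "poly2 p \<Longrightarrow> continuous_on S p"
proof -
  assume "poly2 p"
  then obtain pu pw where "\<forall>z. (p has_derivative (\<lambda>v. fst v * pu z + snd v * pw z)) (at z)"
    using poly2_deriv by blast
  then show ?thesis
    by (meson continuous_at_imp_continuous_on has_derivative_continuous)
qed


fun sm :: "nat \<Rightarrow> (real \<times> real) set \<Rightarrow> (real \<times> real \<Rightarrow> real) \<Rightarrow> bool" where
  "sm 0 W h = (\<forall>z\<in>W. (h has_derivative (\<lambda>v. fst v * pd 0 h z + snd v * pd 1 h z)) (at z))"
| "sm (Suc n) W h = (sm 0 W h \<and> sm n W (pd 0 h) \<and> sm n W (pd 1 h))"

lemma sm_0D: "sm n W h \<Longrightarrow> sm 0 W h" by (cases n) auto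

lemma sm_frechet: "sm n W h \<Longrightarrow> z \<in> W \<Longrightarrow> (h has_derivative (\<lambda>v. fst v * pd 0 h z + snd v * pd 1 h z)) (at z)"
  using sm_0D by fastforce

lemma sm_mono: "sm (Suc n) W h \<Longrightarrow> sm n W h"
proof (induction n arbitrary: h)
  case 0 then show ?case by simp
next
  case (Suc n)
  then show ?case unfolding sm.simps(2)[of "Suc n"] sm.simps(2)[of n] by blast
qed

lemma sm_pd: "sm (Suc n) W h \<Longrightarrow> sm n W (pd i h)"
proof (cases "i = 0")
  case False
  then have "pd i h = pd 1 h" using pd_Suc[of i] by simp
  then show "sm (Suc n) W h \<Longrightarrow> sm n W (pd i h)" by simp
qed simp

lemma sm_pd_eq:
  assumes "(g has_derivative (\<lambda>v. fst v * A + snd v * B)) (at z)"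
  shows "(g has_derivative (\<lambda>v. fst v * pd 0 g z + snd v * pd 1 g z)) (at z)"
  using assms frechet_pd(1)[OF assms, of 0] frechet_pd(1)[OF assms, of 1] by simp

lemma sm0_local: "open W \<Longrightarrow> sm 0 W g \<Longrightarrow> (\<And>w. w \<in> W \<Longrightarrow> g w = h w) \<Longrightarrow> sm 0 W h"
  unfolding sm.simps
proof
  fix z assume a: "open W" "\<forall>z\<in>W. (g has_derivative (\<lambda>v. fst v * pd 0 g z + snd v * pd 1 g z)) (at z)"
    "\<And>w. w \<in> W \<Longrightarrow> g w = h w" and z: "z \<in> W"
  have "(h has_derivative (\<lambda>v. fst v * pd 0 g z + snd v * pd 1 g z)) (at z)"
    by (rule has_derivative_transform_within_open[OF a(2)[rule_format, OF z] a(1) z a(3)])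
  moreover have "pd i g z = pd i h z" for i by (rule pd_local[OF a(1) z a(3)])
  ultimately show "(h has_derivative (\<lambda>v. fst v * pd 0 h z + snd v * pd 1 h z)) (at z)" by simp
qed

lemma sm_local: "open W \<Longrightarrow> sm n W g \<Longrightarrow> (\<And>w. w \<in> W \<Longrightarrow> g w = h w) \<Longrightarrow> sm n W h"
proof (induction n arbitrary: g h)
  case 0
  then show ?case using sm0_local by blast
next
  case (Suc n)
  have "sm n W (pd i h)" for i
  proof (rule Suc.IH[OF Suc(2)])
    show "sm n W (pd i g)" using sm_pd[OF Suc(3)] .
    show "\<And>w. w \<in> W \<Longrightarrow> pd i g w = pd i h w" by (rule pd_local[OF Suc(2) _ Suc(4)])
  qed
  moreover have "sm 0 W h" by (rule sm0_local[OF Suc(2) sm_0D[OF Suc(3)] Suc(4)])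
  ultimately show ?case by simp
qed

lemma sm_cover: "(\<And>z. z \<in> W \<Longrightarrow> \<exists>W'. open W' \<and> z \<in> W' \<and> sm n W' h) \<Longrightarrow> sm n W h"
proof (induction n arbitrary: h)
  case 0
  show ?case unfolding sm.simps
  proof
    fix z assume "z \<in> W"
    then obtain W' where "open W'" "z \<in> W'" "sm 0 W' h" using 0 by blast
    then show "(h has_derivative (\<lambda>v. fst v * pd 0 h z + snd v * pd 1 h z)) (at z)" by simp
  qed
next
  case (Suc n)
  have "sm n W (pd i h)" for i
  proof (rule Suc.IH)
    fix z assume "z \<in> W"
    then obtain W' where "open W'" "z \<in> W'" "sm (Suc n) W' h" using Suc.prems by blast
    then show "\<exists>W'. open W' \<and> z \<in> W' \<and> sm n W' (pd i h)" using sm_pd by blast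
  qed
  moreover have "sm 0 W h" unfolding sm.simps
  proof
    fix z assume "z \<in> W"
    then obtain W' where "open W'" "z \<in> W'" "sm (Suc n) W' h" using Suc.prems by blast
    then show "(h has_derivative (\<lambda>v. fst v * pd 0 h z + snd v * pd 1 h z)) (at z)" by (simp add: sm_frechet)
  qed
  ultimately show ?case by simp
qed

lemma pd_add: "sm n W g \<Longrightarrow> sm m W h \<Longrightarrow> z \<in> W \<Longrightarrow> pd i (\<lambda>z. g z + h z) z = pd i g z + pd i h z"
proof -
  assume a: "sm n W g" "sm m W h" "z \<in> W"
  have "((\<lambda>z. g z + h z) has_derivative (\<lambda>v. fst v * (pd 0 g z + pd 0 h z) + snd v * (pd 1 g z + pd 1 h z))) (at z)"
    by (rule has_derivative_eq_rhs[OF has_derivative_add[OF sm_frechet[OF a(1,3)] sm_frechet[OF a(2,3)]]])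
      (simp add: fun_eq_iff algebra_simps)
  from frechet_pd(1)[OF this, of i] frechet_pd(1)[OF this, of 0] frechet_pd(1)[OF this, of 1]
  show ?thesis by (cases "i = 0") (simp_all add: pd_Suc[of i])
qed

lemma pd_mult: "sm n W g \<Longrightarrow> sm m W h \<Longrightarrow> z \<in> W \<Longrightarrow> pd i (\<lambda>z. g z * h z) z = pd i g z * h z + g z * pd i h z"
proof -
  assume a: "sm n W g" "sm m W h" "z \<in> W"
  have "((\<lambda>z. g z * h z) has_derivative (\<lambda>v. fst v * (pd 0 g z * h z + g z * pd 0 h z) + snd v * (pd 1 g z * h z + g z * pd 1 h z))) (at z)"
    by (rule has_derivative_eq_rhs[OF has_derivative_mult[OF sm_frechet[OF a(1,3)] sm_frechet[OF a(2,3)]]])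
      (simp add: fun_eq_iff algebra_simps)
  from frechet_pd(1)[OF this, of i] frechet_pd(1)[OF this, of 0] frechet_pd(1)[OF this, of 1]
  show ?thesis by (cases "i = 0") (simp_all add: pd_Suc[of i])
qed

lemma pd_inverse: "sm n W q \<Longrightarrow> z \<in> W \<Longrightarrow> q z \<noteq> 0 \<Longrightarrow>
   pd i (\<lambda>z. inverse (q z)) z = (-1) * pd i q z * inverse (q z) * inverse (q z)"
proof -
  assume a: "sm n W q" "z \<in> W" "q z \<noteq> 0"
  have "((\<lambda>z. inverse (q z)) has_derivative (\<lambda>v. fst v * ((-1) * pd 0 q z * inverse (q z) * inverse (q z))
      + snd v * ((-1) * pd 1 q z * inverse (q z) * inverse (q z)))) (at z)"
    by (rule has_derivative_eq_rhs[OF Deriv.has_derivative_inverse[OF a(3) sm_frechet[OF a(1,2)]]])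
      (simp add: fun_eq_iff algebra_simps)
  from frechet_pd(1)[OF this, of i] frechet_pd(1)[OF this, of 0] frechet_pd(1)[OF this, of 1]
  show ?thesis by (cases "i = 0") (simp_all add: pd_Suc[of i])
qed

lemma sm_add0: "open W \<Longrightarrow> sm n W g \<Longrightarrow> sm m W h \<Longrightarrow> sm 0 W (\<lambda>z. g z + h z)"
  unfolding sm.simps
proof
  fix z assume a: "open W" "sm n W g" "sm m W h" and z: "z \<in> W"
  show "((\<lambda>z. g z + h z) has_derivative (\<lambda>v. fst v * pd 0 (\<lambda>z. g z + h z) z + snd v * pd 1 (\<lambda>z. g z + h z) z)) (at z)"
    unfolding pd_add[OF a(2,3) z]
    by (rule has_derivative_eq_rhs[OF has_derivative_add[OF sm_frechet[OF a(2) z] sm_frechet[OF a(3) z]]])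
      (simp add: fun_eq_iff algebra_simps)
qed

lemma sm_add: "open W \<Longrightarrow> sm n W g \<Longrightarrow> sm n W h \<Longrightarrow> sm n W (\<lambda>z. g z + h z)"
proof (induction n arbitrary: g h)
  case 0
  then show ?case using sm_add0 by blast
next
  case (Suc n)
  have "sm n W (pd i (\<lambda>z. g z + h z))" for i
  proof -
    have "sm n W (\<lambda>z. pd i g z + pd i h z)"
      by (rule Suc.IH[OF Suc(2) sm_pd[OF Suc(3)] sm_pd[OF Suc(4)]])
    then show ?thesis
    proof (rule sm_local[OF Suc(2)])
      fix w assume "w \<in> W" then show "pd i g w + pd i h w = pd i (\<lambda>z. g z + h z) w"
        using pd_add[OF Suc(3,4)] by simp
    qed
  qed
  moreover have "sm 0 W (\<lambda>z. g z + h z)"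
    using sm_add0[OF Suc(2) sm_0D[OF Suc(3)] sm_0D[OF Suc(4)]] .
  ultimately show ?case by simp
qed

lemma sm_mult0: "sm n W g \<Longrightarrow> sm m W h \<Longrightarrow> sm 0 W (\<lambda>z. g z * h z)"
  unfolding sm.simps
proof
  fix z assume a: "sm n W g" "sm m W h" and z: "z \<in> W"
  show "((\<lambda>z. g z * h z) has_derivative (\<lambda>v. fst v * pd 0 (\<lambda>z. g z * h z) z + snd v * pd 1 (\<lambda>z. g z * h z) z)) (at z)"
    unfolding pd_mult[OF a(1,2) z]
    by (rule has_derivative_eq_rhs[OF has_derivative_mult[OF sm_frechet[OF a(1) z] sm_frechet[OF a(2) z]]])
      (simp add: fun_eq_iff algebra_simps)
qed

lemma sm_mult: "open W \<Longrightarrow> sm n W g \<Longrightarrow> sm n W h \<Longrightarrow> sm n W (\<lambda>z. g z * h z)"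
proof (induction n arbitrary: g h)
  case 0
  then show ?case using sm_mult0 by blast
next
  case (Suc n)
  have "sm n W (pd i (\<lambda>z. g z * h z))" for i
  proof -
    have "sm n W (\<lambda>z. pd i g z * h z + g z * pd i h z)"
      by (rule sm_add[OF Suc(2) Suc.IH[OF Suc(2) sm_pd[OF Suc(3)] sm_mono[OF Suc(4)]]
            Suc.IH[OF Suc(2) sm_mono[OF Suc(3)] sm_pd[OF Suc(4)]]])
    then show ?thesis
    proof (rule sm_local[OF Suc(2)])
      fix w assume "w \<in> W" then show "pd i g w * h w + g w * pd i h w = pd i (\<lambda>z. g z * h z) w"
        using pd_mult[OF Suc(3,4)] by simp
    qed
  qed
  moreover have "sm 0 W (\<lambda>z. g z * h z)"
    using sm_mult0[OF Suc(3) Suc(4)] .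
  ultimately show ?case by simp
qed

lemma sm_poly: "poly2 p \<Longrightarrow> sm n W p"
proof (induction n arbitrary: p)
  case 0
  then obtain pu pw where h: "\<And>z. (p has_derivative (\<lambda>v. fst v * pu z + snd v * pw z)) (at z)"
    using poly2_deriv by blast
  show ?case using sm_pd_eq[OF h] by simp
next
  case (Suc n)
  then obtain pu pw where h: "poly2 pu" "poly2 pw" "\<And>z. (p has_derivative (\<lambda>v. fst v * pu z + snd v * pw z)) (at z)"
    using poly2_deriv by blast
  have e0: "pd 0 p = pu" using frechet_pd(1)[OF h(3), of 0] by (simp add: fun_eq_iff)
  have e1: "pd 1 p = pw" using frechet_pd(1)[OF h(3), of 1] by (simp add: fun_eq_iff)
  have e1': "pd (Suc 0) p = pw" using e1 by simp
  show ?case using Suc.IH[OF h(1)] Suc.IH[OF h(2)] sm_pd_eq[OF h(3)] by (simp add: e0 e1 e1')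
qed

lemma sm_const: "sm n W (\<lambda>z. c)"
  by (rule sm_poly[OF poly2.pconst])

lemma sm_inverse: "open W \<Longrightarrow> sm n W q \<Longrightarrow> (\<And>z. z \<in> W \<Longrightarrow> q z \<noteq> 0) \<Longrightarrow> sm n W (\<lambda>z. inverse (q z))"
proof (induction n arbitrary: q)
  case 0
  show ?case unfolding sm.simps
  proof
    fix z assume z: "z \<in> W"
    show "((\<lambda>z. inverse (q z)) has_derivative (\<lambda>v. fst v * pd 0 (\<lambda>z. inverse (q z)) z + snd v * pd 1 (\<lambda>z. inverse (q z)) z)) (at z)"
      unfolding pd_inverse[OF 0(2) z 0(3)[OF z]]
      by (rule has_derivative_eq_rhs[OF Deriv.has_derivative_inverse[OF 0(3)[OF z] sm_frechet[OF 0(2) z]]])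
        (simp add: fun_eq_iff algebra_simps)
  qed
next
  case (Suc n)
  have I: "sm n W (\<lambda>z. inverse (q z))" by (rule Suc.IH[OF Suc(2) sm_mono[OF Suc(3)] Suc(4)])
  have "sm n W (pd i (\<lambda>z. inverse (q z)))" for i
  proof -
    have "sm n W (\<lambda>z. (-1) * pd i q z * inverse (q z) * inverse (q z))"
      by (intro sm_mult[OF Suc(2)] sm_const sm_pd[OF Suc(3)] I)
    then show ?thesis
    proof (rule sm_local[OF Suc(2)])
      fix w assume "w \<in> W" then show "(-1) * pd i q w * inverse (q w) * inverse (q w) = pd i (\<lambda>z. inverse (q z)) w"
        using pd_inverse[OF Suc(3) _ Suc(4)] by simp
    qed
  qed
  moreover have "sm 0 W (\<lambda>z. inverse (q z))" using I by (rule sm_0D)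
  ultimately show ?case by simp
qed

lemma sm_pow: "open W \<Longrightarrow> sm n W f \<Longrightarrow> sm n W (\<lambda>z. f z ^ m)"
proof (induction m)
  case 0 then show ?case using sm_const[of n W 1] by simp
next
  case (Suc m) then show ?case using sm_mult[of W n f "\<lambda>z. f z ^ m"] by simp
qed


fun bdd :: "nat \<Rightarrow> (real \<times> real) set \<Rightarrow> real \<times> real \<Rightarrow> real \<Rightarrow> (real \<times> real \<Rightarrow> real) \<Rightarrow> bool" where
  "bdd 0 V a e h = (\<exists>M. \<forall>z\<in>V. \<bar>h z\<bar> \<le> M * dist z a powr e)"
| "bdd (Suc n) V a e h = (bdd 0 V a e h \<and> bdd n V a (e - 1) (pd 0 h) \<and> bdd n V a (e - 1) (pd 1 h))"

lemma bdd_0D: "bdd n V a e h \<Longrightarrow> bdd 0 V a e h" by (cases n) auto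

lemma bdd_mono: "bdd (Suc n) V a e h \<Longrightarrow> bdd n V a e h"
proof (induction n arbitrary: e h)
  case 0 then show ?case by simp
next
  case (Suc n)
  then show ?case unfolding bdd.simps(2)[of "Suc n"] bdd.simps(2)[of n] by blast
qed

lemma bdd_pd: "bdd (Suc n) V a e h \<Longrightarrow> bdd n V a (e - 1) (pd i h)"
proof (cases "i = 0")
  case False
  then have "pd i h = pd 1 h" using pd_Suc[of i] by simp
  then show "bdd (Suc n) V a e h \<Longrightarrow> bdd n V a (e - 1) (pd i h)" by simp
qed simp

lemma bdd0_nonneg: "bdd 0 V a e h \<Longrightarrow> \<exists>M\<ge>0. \<forall>z\<in>V. \<bar>h z\<bar> \<le> M * dist z a powr e"
proof -
  assume "bdd 0 V a e h"
  then obtain M where M: "\<forall>z\<in>V. \<bar>h z\<bar> \<le> M * dist z a powr e" by auto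
  have "\<forall>z\<in>V. \<bar>h z\<bar> \<le> max M 0 * dist z a powr e"
  proof
    fix z assume "z \<in> V"
    then have "\<bar>h z\<bar> \<le> M * dist z a powr e" using M by blast
    also have "\<dots> \<le> max M 0 * dist z a powr e" by (rule mult_right_mono) auto
    finally show "\<bar>h z\<bar> \<le> max M 0 * dist z a powr e" .
  qed
  then show ?thesis by (intro exI[of _ "max M 0"]) auto
qed

lemma bdd0_local: "bdd 0 V a e g \<Longrightarrow> (\<And>w. w \<in> V \<Longrightarrow> g w = h w) \<Longrightarrow> bdd 0 V a e h"
proof -
  assume a: "bdd 0 V a e g" "\<And>w. w \<in> V \<Longrightarrow> g w = h w"
  then obtain M where "\<forall>z\<in>V. \<bar>g z\<bar> \<le> M * dist z a powr e" by auto
  then have "\<forall>z\<in>V. \<bar>h z\<bar> \<le> M * dist z a powr e" using a(2) by auto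
  then show ?thesis by auto
qed

lemma bdd_local: "open V \<Longrightarrow> bdd n V a e g \<Longrightarrow> (\<And>w. w \<in> V \<Longrightarrow> g w = h w) \<Longrightarrow> bdd n V a e h"
proof (induction n arbitrary: e g h)
  case 0
  then show ?case using bdd0_local by blast
next
  case (Suc n)
  have "bdd n V a (e - 1) (pd i h)" for i
  proof (rule Suc.IH[OF Suc(2)])
    show "bdd n V a (e - 1) (pd i g)" using bdd_pd[OF Suc(3)] .
    show "\<And>w. w \<in> V \<Longrightarrow> pd i g w = pd i h w" by (rule pd_local[OF Suc(2) _ Suc(4)])
  qed
  moreover have "bdd 0 V a e h" by (rule bdd0_local[OF bdd_0D[OF Suc(3)] Suc(4)])
  ultimately show ?case by simp
qed

lemma bdd0_add: "bdd 0 V a e g \<Longrightarrow> bdd 0 V a e h \<Longrightarrow> bdd 0 V a e (\<lambda>z. g z + h z)"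
proof -
  assume "bdd 0 V a e g" "bdd 0 V a e h"
  then obtain M1 M2 where M: "\<forall>z\<in>V. \<bar>g z\<bar> \<le> M1 * dist z a powr e" "\<forall>z\<in>V. \<bar>h z\<bar> \<le> M2 * dist z a powr e" by auto
  have "\<forall>z\<in>V. \<bar>g z + h z\<bar> \<le> (M1 + M2) * dist z a powr e"
  proof
    fix z assume "z \<in> V"
    then have "\<bar>g z\<bar> \<le> M1 * dist z a powr e" "\<bar>h z\<bar> \<le> M2 * dist z a powr e" using M by auto
    then show "\<bar>g z + h z\<bar> \<le> (M1 + M2) * dist z a powr e" by (simp add: algebra_simps)
  qed
  then show ?thesis by auto
qed

lemma bdd0_mult: "bdd 0 V a e g \<Longrightarrow> bdd 0 V a e' h \<Longrightarrow> E = e + e' \<Longrightarrow> bdd 0 V a E (\<lambda>z. g z * h z)"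
proof -
  assume a: "bdd 0 V a e g" "bdd 0 V a e' h" "E = e + e'"
  obtain M1 where M1: "M1 \<ge> 0" "\<forall>z\<in>V. \<bar>g z\<bar> \<le> M1 * dist z a powr e" using bdd0_nonneg[OF a(1)] by auto
  obtain M2 where M2: "M2 \<ge> 0" "\<forall>z\<in>V. \<bar>h z\<bar> \<le> M2 * dist z a powr e'" using bdd0_nonneg[OF a(2)] by auto
  have "\<forall>z\<in>V. \<bar>g z * h z\<bar> \<le> (M1 * M2) * dist z a powr E"
  proof
    fix z assume "z \<in> V"
    then have b: "\<bar>g z\<bar> \<le> M1 * dist z a powr e" "\<bar>h z\<bar> \<le> M2 * dist z a powr e'" using M1 M2 by auto
    have "\<bar>g z * h z\<bar> = \<bar>g z\<bar> * \<bar>h z\<bar>" by (simp add: abs_mult)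
    also have "\<dots> \<le> (M1 * dist z a powr e) * (M2 * dist z a powr e')"
      by (rule mult_mono[OF b]) (auto simp: M1 M2)
    also have "\<dots> = (M1 * M2) * dist z a powr E" by (simp add: a(3) powr_add)
    finally show "\<bar>g z * h z\<bar> \<le> (M1 * M2) * dist z a powr E" .
  qed
  then show ?thesis by auto
qed

lemma bdd_add: "open V \<Longrightarrow> sm n V g \<Longrightarrow> sm n V h \<Longrightarrow> bdd n V a e g \<Longrightarrow> bdd n V a e h \<Longrightarrow> bdd n V a e (\<lambda>z. g z + h z)"
proof (induction n arbitrary: e g h)
  case 0
  then show ?case using bdd0_add by simp
next
  case (Suc n)
  have "bdd n V a (e - 1) (pd i (\<lambda>z. g z + h z))" for i
  proof -
    have "bdd n V a (e - 1) (\<lambda>z. pd i g z + pd i h z)"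
      by (rule Suc.IH[OF Suc(2) sm_pd[OF Suc(3)] sm_pd[OF Suc(4)] bdd_pd[OF Suc(5)] bdd_pd[OF Suc(6)]])
    then show ?thesis
    proof (rule bdd_local[OF Suc(2)])
      fix w assume "w \<in> V" then show "pd i g w + pd i h w = pd i (\<lambda>z. g z + h z) w"
        using pd_add[OF Suc(3,4)] by simp
    qed
  qed
  moreover have "bdd 0 V a e (\<lambda>z. g z + h z)" by (rule bdd0_add[OF bdd_0D[OF Suc(5)] bdd_0D[OF Suc(6)]])
  ultimately show ?case by simp
qed

lemma bdd_mult: "open V \<Longrightarrow> sm n V g \<Longrightarrow> sm n V h \<Longrightarrow> bdd n V a e g \<Longrightarrow> bdd n V a e' h \<Longrightarrow> E = e + e' \<Longrightarrow>
  bdd n V a E (\<lambda>z. g z * h z)"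
proof (induction n arbitrary: e e' E g h)
  case 0
  then show ?case using bdd0_mult by simp
next
  case (Suc n)
  have "bdd n V a (E - 1) (pd i (\<lambda>z. g z * h z))" for i
  proof -
    have "bdd n V a (E - 1) (\<lambda>z. pd i g z * h z + g z * pd i h z)"
    proof (rule bdd_add[OF Suc(2)])
      show "sm n V (\<lambda>z. pd i g z * h z)" by (rule sm_mult[OF Suc(2) sm_pd[OF Suc(3)] sm_mono[OF Suc(4)]])
      show "sm n V (\<lambda>z. g z * pd i h z)" by (rule sm_mult[OF Suc(2) sm_mono[OF Suc(3)] sm_pd[OF Suc(4)]])
      show "bdd n V a (E - 1) (\<lambda>z. pd i g z * h z)"
        by (rule Suc.IH[OF Suc(2) sm_pd[OF Suc(3)] sm_mono[OF Suc(4)] bdd_pd[OF Suc(5)] bdd_mono[OF Suc(6)]])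
          (use Suc(7) in simp)
      show "bdd n V a (E - 1) (\<lambda>z. g z * pd i h z)"
        by (rule Suc.IH[OF Suc(2) sm_mono[OF Suc(3)] sm_pd[OF Suc(4)] bdd_mono[OF Suc(5)] bdd_pd[OF Suc(6)]])
          (use Suc(7) in simp)
    qed
    then show ?thesis
    proof (rule bdd_local[OF Suc(2)])
      fix w assume "w \<in> V" then show "pd i g w * h w + g w * pd i h w = pd i (\<lambda>z. g z * h z) w"
        using pd_mult[OF Suc(3,4)] by simp
    qed
  qed
  moreover have "bdd 0 V a E (\<lambda>z. g z * h z)" by (rule bdd0_mult[OF bdd_0D[OF Suc(5)] bdd_0D[OF Suc(6)] Suc(7)])
  ultimately show ?case by simp
qed

lemma pd_const: "pd i (\<lambda>z. c) = (\<lambda>z. 0)"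
proof
  fix z
  have "((\<lambda>z::real\<times>real. c) has_derivative (\<lambda>v. fst v * 0 + snd v * 0)) (at z)"
    by (rule has_derivative_eq_rhs[OF has_derivative_const]) simp
  from frechet_pd(1)[OF this, of i] show "pd i (\<lambda>z. c) z = 0" by simp
qed

lemma bdd_zero: "bdd n V a e (\<lambda>z. 0)"
proof (induction n arbitrary: e)
  case 0 then show ?case by (simp, intro exI[of _ 0]) simp
next
  case (Suc n)
  have "bdd 0 V a e (\<lambda>z. 0)" by (simp, intro exI[of _ 0]) simp
  then show ?case using Suc by (simp add: pd_const)
qed

lemma bdd_one: "a \<notin> V \<Longrightarrow> bdd n V a 0 (\<lambda>z. 1)"
proof (cases n)
  case 0
  assume "a \<notin> V"
  then have "\<forall>z\<in>V. \<bar>1::real\<bar> \<le> 1 * dist z a powr 0" by auto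
  then show ?thesis using 0 by (simp del: powr_zero_eq_one) (intro exI[of _ 1], simp)
next
  case (Suc m)
  assume "a \<notin> V"
  then have "\<forall>z\<in>V. \<bar>1::real\<bar> \<le> 1 * dist z a powr 0" by auto
  then have "bdd 0 V a 0 (\<lambda>z. 1)" by (simp del: powr_zero_eq_one) (intro exI[of _ 1], simp)
  then show ?thesis using Suc by (simp add: pd_const bdd_zero)
qed

lemma bdd_pow: "open V \<Longrightarrow> a \<notin> V \<Longrightarrow> sm n V f \<Longrightarrow> bdd n V a 1 f \<Longrightarrow> bdd n V a (real m) (\<lambda>z. f z ^ m)"
proof (induction m)
  case 0 then show ?case using bdd_one[of a V n] by simp
next
  case (Suc m)
  have "bdd n V a (real (Suc m)) (\<lambda>z. f z * f z ^ m)"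
    by (rule bdd_mult[OF Suc(2) Suc(4) sm_pow[OF Suc(2) Suc(4)] Suc(5) Suc.IH[OF Suc(2-5)]]) simp
  then show ?case by simp
qed

lemma bdd_of_pds:
  "(\<And>is. length is \<le> n \<Longrightarrow> \<exists>M. \<forall>z\<in>V. \<bar>pds is h z\<bar> \<le> M * dist z a powr (e - real (length is))) \<Longrightarrow> bdd n V a e h"
proof (induction n arbitrary: e h)
  case 0
  from 0[of "[]"] show ?case by simp
next
  case (Suc n)
  have "bdd n V a (e - 1) (pd i h)" for i
  proof (rule Suc.IH)
    fix "is" :: "nat list" assume "length is \<le> n"
    then obtain M where "\<forall>z\<in>V. \<bar>pds (is @ [i]) h z\<bar> \<le> M * dist z a powr (e - real (length (is @ [i])))"
      using Suc.prems[of "is @ [i]"] by auto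
    then show "\<exists>M. \<forall>z\<in>V. \<bar>pds is (pd i h) z\<bar> \<le> M * dist z a powr (e - 1 - real (length is))"
      by (auto simp: pds_append algebra_simps)
  qed
  moreover have "bdd 0 V a e h" using Suc.prems[of "[]"] by simp
  ultimately show ?case by simp
qed


lemma dist_axis1: "dist (fst a + h, snd a) a = \<bar>h\<bar>"
  by (cases a) (simp add: dist_Pair_Pair dist_real_def)

lemma dist_axis2: "dist (fst a, snd a + h) a = \<bar>h\<bar>"
  by (cases a) (simp add: dist_Pair_Pair dist_real_def)

lemma small_quot:
  fixes G :: "real \<Rightarrow> real"
  assumes "\<rho> > 0" and M: "\<And>h. h \<noteq> 0 \<Longrightarrow> \<bar>h\<bar> < \<rho> \<Longrightarrow> \<bar>G h\<bar> \<le> M * \<bar>h\<bar> powr e" and e: "e > 1"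
  shows "((\<lambda>h. G h / h) \<longlongrightarrow> 0) (at 0)"
proof (rule Lim_null_comparison)
  show "\<forall>\<^sub>F h in at (0::real). norm (G h / h) \<le> M * \<bar>h\<bar> powr (e - 1)"
    unfolding eventually_at
  proof (intro exI[of _ \<rho>] conjI allI ballI impI)
    show "\<rho> > 0" by fact
    fix h :: real assume "h \<noteq> 0 \<and> dist h 0 < \<rho>"
    then have h: "h \<noteq> 0" "\<bar>h\<bar> < \<rho>" by auto
    have "norm (G h / h) = \<bar>G h\<bar> / \<bar>h\<bar>" by (simp add: abs_divide)
    also have "\<dots> \<le> M * \<bar>h\<bar> powr e / \<bar>h\<bar>" by (rule divide_right_mono[OF M[OF h]]) simp
    also have "\<dots> = M * \<bar>h\<bar> powr (e - 1)" using h by (simp add: powr_diff)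
    finally show "norm (G h / h) \<le> M * \<bar>h\<bar> powr (e - 1)" .
  qed
  have "((\<lambda>h::real. \<bar>h\<bar> powr (e - 1)) \<longlongrightarrow> 0) (at 0)"
    by (rule tendsto_zero_powrI) (auto intro!: tendsto_eq_intros simp: e)
  then show "((\<lambda>h. M * \<bar>h\<bar> powr (e - 1)) \<longlongrightarrow> 0) (at 0)"
    by (rule tendsto_mult_right_zero)
qed

lemma small_deriv0:
  assumes "\<rho> > 0" "\<forall>z\<in>ball a \<rho> - {a}. \<bar>g z\<bar> \<le> M * dist z a powr e" "e > 1" "g a = 0"
  shows "((\<lambda>t. g (t, snd a)) has_real_derivative 0) (at (fst a))"
    and "((\<lambda>t. g (fst a, t)) has_real_derivative 0) (at (snd a))"
proof -
  have "((\<lambda>h. g (fst a + h, snd a) / h) \<longlongrightarrow> 0) (at 0)"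
  proof (rule small_quot[OF assms(1) _ assms(3)])
    fix h :: real assume h: "h \<noteq> 0" "\<bar>h\<bar> < \<rho>"
    have "(fst a + h, snd a) \<in> ball a \<rho> - {a}" using h dist_axis1[of a h]
      by (auto simp: dist_commute prod_eq_iff)
    then have "\<bar>g (fst a + h, snd a)\<bar> \<le> M * dist (fst a + h, snd a) a powr e" using assms(2) by blast
    then show "\<bar>g (fst a + h, snd a)\<bar> \<le> M * \<bar>h\<bar> powr e" using dist_axis1[of a h] by simp
  qed
  then show "((\<lambda>t. g (t, snd a)) has_real_derivative 0) (at (fst a))"
    unfolding DERIV_def using assms(4) by (cases a) simp
  have "((\<lambda>h. g (fst a, snd a + h) / h) \<longlongrightarrow> 0) (at 0)"
  proof (rule small_quot[OF assms(1) _ assms(3)])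
    fix h :: real assume h: "h \<noteq> 0" "\<bar>h\<bar> < \<rho>"
    have "(fst a, snd a + h) \<in> ball a \<rho> - {a}" using h dist_axis2[of a h]
      by (auto simp: dist_commute prod_eq_iff)
    then have "\<bar>g (fst a, snd a + h)\<bar> \<le> M * dist (fst a, snd a + h) a powr e" using assms(2) by blast
    then show "\<bar>g (fst a, snd a + h)\<bar> \<le> M * \<bar>h\<bar> powr e" using dist_axis2[of a h] by simp
  qed
  then show "((\<lambda>t. g (fst a, t)) has_real_derivative 0) (at (snd a))"
    unfolding DERIV_def using assms(4) by (cases a) simp
qed

lemma small_cont:
  assumes "\<rho> > 0" "\<forall>z\<in>ball a \<rho> - {a}. \<bar>g z\<bar> \<le> M * dist z a powr e" "e > 0" "g a = 0"
  shows "isCont g a"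
  unfolding isCont_def assms(4)
proof (rule Lim_null_comparison)
  show "\<forall>\<^sub>F z in at a. norm (g z) \<le> M * dist z a powr e"
    unfolding eventually_at using assms(1,2) by (intro exI[of _ \<rho>]) (auto simp: dist_commute)
  have "((\<lambda>z. dist z a) \<longlongrightarrow> 0) (at a)"
    using tendsto_dist[OF tendsto_ident_at tendsto_const, of a a UNIV] by simp
  then have "((\<lambda>z. dist z a powr e) \<longlongrightarrow> 0) (at a)"
    by (rule tendsto_zero_powrI) (auto simp: assms(3))
  then show "((\<lambda>z. M * dist z a powr e) \<longlongrightarrow> 0) (at a)"
    by (rule tendsto_mult_right_zero)
qed

lemma cont_lemma:
  assumes "\<rho> > 0" "sm n (ball a \<rho> - {a}) g" "bdd n (ball a \<rho> - {a}) a e g" "e > 0" "g a = 0"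
  shows "continuous_on (ball a \<rho>) g"
  unfolding continuous_on_eq_continuous_at[OF open_ball]
proof
  fix x assume x: "x \<in> ball a \<rho>"
  show "isCont g x"
  proof (cases "x = a")
    case True
    obtain M where "\<forall>z\<in>ball a \<rho> - {a}. \<bar>g z\<bar> \<le> M * dist z a powr e" using bdd_0D[OF assms(3)] by auto
    then show ?thesis using small_cont[of \<rho> a g M e] assms(1,4,5) True by blast
  next
    case False
    then have "x \<in> ball a \<rho> - {a}" using x by auto
    then show ?thesis using has_derivative_continuous[OF sm_frechet[OF assms(2)]] by blast
  qed
qed

lemma flat_from_bdd:
  assumes "\<rho> > 0"
  shows "sm k (ball a \<rho> - {a}) g \<Longrightarrow> bdd k (ball a \<rho> - {a}) a e g \<Longrightarrow> e \<ge> real k + 1 \<Longrightarrow> g a = 0 \<Longrightarrow>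
    Ck_on k (ball a \<rho>) g \<and> (\<forall>is. length is \<le> k \<longrightarrow> pds is g a = 0)"
proof (induction k arbitrary: g e)
  case 0
  have "continuous_on (ball a \<rho>) g" by (rule cont_lemma[OF assms 0(1,2)]) (use 0 in auto)
  then show ?case using 0 by simp
next
  case (Suc k)
  let ?V = "ball a \<rho> - {a}"
  have cont: "continuous_on (ball a \<rho>) g" by (rule cont_lemma[OF assms Suc(2,3)]) (use Suc in auto)
  obtain M where M: "\<forall>z\<in>?V. \<bar>g z\<bar> \<le> M * dist z a powr e" using bdd_0D[OF Suc(3)] by auto
  have e1: "e > 1" using Suc(4) by simp
  note D = small_deriv0[OF assms M e1 Suc(5)]
  have pda: "pd i g a = 0" "pdiff_at i g a" for i
    using D by (auto simp: pd_def2 pdiff_at_def DERIV_imp_deriv has_field_derivative_def intro: differentiableI)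
  have IH: "Ck_on k (ball a \<rho>) (pd i g) \<and> (\<forall>is. length is \<le> k \<longrightarrow> pds is (pd i g) a = 0)" for i
    by (rule Suc.IH[OF sm_pd[OF Suc(2)] bdd_pd[OF Suc(3)]]) (use Suc(4) pda in auto)
  have pdz: "pdiff_at i g z" if "z \<in> ball a \<rho>" for i z
  proof (cases "z = a")
    case True then show ?thesis using pda by simp
  next
    case False then have "z \<in> ?V" using that by auto
    then show ?thesis using frechet_pd(2)[OF sm_frechet[OF Suc(2)]] by blast
  qed
  have pds0: "pds is g a = 0" if "length is \<le> Suc k" for "is"
  proof (cases "is" rule: rev_exhaust)
    case Nil then show ?thesis using Suc(5) by simp
  next
    case (snoc ys i)
    then show ?thesis using IH[of i] that by (simp add: pds_append)
  qed
  show ?case using cont IH pdz pds0 by simp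
qed


lemma deriv_shift: "deriv (\<lambda>t. F (t + c)) x = deriv F (x + c)"
  by (simp add: deriv_def DERIV_shift)

lemma pds_shift: "pds is (\<lambda>z. g (fst z + c1, snd z + c2)) z = pds is g (fst z + c1, snd z + c2)"
proof (induction "is" arbitrary: z)
  case Nil then show ?case by simp
next
  case (Cons i "is")
  have e: "pds is (\<lambda>z. g (fst z + c1, snd z + c2)) = (\<lambda>z. pds is g (fst z + c1, snd z + c2))"
    using Cons.IH by (simp add: fun_eq_iff)
  show ?case
    by (simp add: e pd_def2 deriv_shift[of "\<lambda>t. pds is g (t, snd z + c2)" c1]
        deriv_shift[of "\<lambda>t. pds is g (fst z + c1, t)" c2])
qed

definition sw :: "nat \<Rightarrow> nat" where "sw i = (if i = 0 then 1 else 0)"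

lemma sw0[simp]: "sw 0 = 1" and sw_nz[simp]: "i \<noteq> 0 \<Longrightarrow> sw i = 0"
  by (auto simp: sw_def)

lemma pds_swap: "pds is (\<lambda>z. g (snd z, fst z)) z = pds (map sw is) g (snd z, fst z)"
proof (induction "is" arbitrary: z)
  case Nil then show ?case by simp
next
  case (Cons i "is")
  have e: "pds is (\<lambda>z. g (snd z, fst z)) = (\<lambda>z. pds (map sw is) g (snd z, fst z))"
    using Cons.IH by (simp add: fun_eq_iff)
  show ?case by (cases "i = 0") (simp_all add: e pd_def2)
qed

lemma regular_sm: "regular_at f z \<Longrightarrow> \<exists>W. open W \<and> z \<in> W \<and> sm n W f"
proof -
  assume "regular_at f z"
  then obtain p q U where h: "polyfun2 p" "polyfun2 q" "open U" "z \<in> U" "q z \<noteq> 0" "\<forall>w\<in>U. f w = p w / q w"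
    unfolding regular_at_def by blast
  have pp: "poly2 p" "poly2 q" using h polyfun2_poly2 by auto
  let ?W = "U \<inter> {w. q w \<noteq> 0}"
  have o: "open ?W" by (intro open_Int h(3) open_Collect_neq poly2_continuous[OF pp(2)] continuous_on_const)
  have "sm n ?W (\<lambda>w. p w * inverse (q w))"
    by (intro sm_mult[OF o] sm_poly[OF pp(1)] sm_inverse[OF o sm_poly[OF pp(2)]]) auto
  then have "sm n ?W f" by (rule sm_local[OF o]) (use h(6) in \<open>auto simp: divide_inverse\<close>)
  then show ?thesis using o h by blast
qed

lemma sm_pds: "sm n W h \<Longrightarrow> length is \<le> n \<Longrightarrow> sm (n - length is) W (pds is h)"
proof (induction "is")
  case Nil then show ?case by simp
next
  case (Cons i "is")
  then have "sm (n - length is) W (pds is h)" by simp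
  moreover have "n - length is = Suc (n - length (i # is))" using Cons.prems(2) by simp
  ultimately have "sm (Suc (n - length (i # is))) W (pds is h)" by simp
  then have "sm (n - length (i # is)) W (pd i (pds is h))" by (rule sm_pd)
  then show ?case by simp
qed

lemma bound_compact: "compact K \<Longrightarrow> continuous_on K h \<Longrightarrow> \<exists>B. \<forall>z\<in>K. \<bar>h z :: real\<bar> \<le> B"
proof -
  assume "compact K" "continuous_on K h"
  then have "bounded (h ` K)" by (intro compact_imp_bounded compact_continuous_image)
  then show ?thesis unfolding bounded_iff by auto
qed

lemma sm_cont: "sm n W h \<Longrightarrow> K \<subseteq> W \<Longrightarrow> continuous_on K h"
proof -
  assume a: "sm n W h" "K \<subseteq> W"
  have "\<forall>x\<in>K. isCont h x"
  proof
    fix x assume "x \<in> K" then have "x \<in> W" using a(2) by blast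
    then show "isCont h x" by (rule has_derivative_continuous[OF sm_frechet[OF a(1)]])
  qed
  then show ?thesis by (rule continuous_at_imp_continuous_on)
qed

lemma sm_le: "m \<le> n \<Longrightarrow> sm n W h \<Longrightarrow> sm m W h"
proof (induction n)
  case 0 then show ?case by simp
next
  case (Suc n)
  show ?case
  proof (cases "m = Suc n")
    case True then show ?thesis using Suc by simp
  next
    case False then have "m \<le> n" using Suc(2) by simp
    then show ?thesis using Suc.IH sm_mono[OF Suc(3)] by blast
  qed
qed

lemma onorm_lin2: "onorm (\<lambda>v::real\<times>real. fst v * A + snd v * B) \<le> \<bar>A\<bar> + \<bar>B\<bar>"
proof (rule onorm_le)
  fix v :: "real \<times> real"
  have "norm (fst v * A + snd v * B) \<le> \<bar>fst v\<bar> * \<bar>A\<bar> + \<bar>snd v\<bar> * \<bar>B\<bar>"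
    by (simp add: abs_mult[symmetric] abs_triangle_ineq)
  also have "\<dots> \<le> norm v * \<bar>A\<bar> + norm v * \<bar>B\<bar>"
    by (intro add_mono mult_right_mono) (use norm_fst_le[of "fst v" "snd v"] norm_snd_le[of "snd v" "fst v"] in simp_all)
  finally show "norm (fst v * A + snd v * B) \<le> (\<bar>A\<bar> + \<bar>B\<bar>) * norm v" by (simp add: algebra_simps)
qed

lemma lipschitz_sm:
  assumes "sm (Suc 0) W f" "convex K" "compact K" "K \<subseteq> W" "open W"
  shows "\<exists>L. \<forall>x\<in>K. \<forall>y\<in>K. \<bar>f x - f y\<bar> \<le> L * dist x y"
proof -
  have c0: "continuous_on K (pd 0 f)" "continuous_on K (pd 1 f)"
    using sm_cont[OF sm_pd[OF assms(1)] assms(4)] by auto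
  obtain B0 where B0: "\<forall>z\<in>K. \<bar>pd 0 f z\<bar> \<le> B0" using bound_compact[OF assms(3) c0(1)] by blast
  obtain B1 where B1: "\<forall>z\<in>K. \<bar>pd 1 f z\<bar> \<le> B1" using bound_compact[OF assms(3) c0(2)] by blast
  have "\<forall>x\<in>K. \<forall>y\<in>K. norm (f x - f y) \<le> (B0 + B1) * norm (x - y)"
  proof (intro ballI)
    fix x y assume xy: "x \<in> K" "y \<in> K"
    show "norm (f x - f y) \<le> (B0 + B1) * norm (x - y)"
    proof (rule differentiable_bound[OF assms(2) _ _ xy])
      fix z assume z: "z \<in> K"
      show "(f has_derivative (\<lambda>v. fst v * pd 0 f z + snd v * pd 1 f z)) (at z within K)"
        using sm_frechet[OF assms(1)] z assms(4) by (blast intro: has_derivative_at_withinI)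
      show "onorm (\<lambda>v. fst v * pd 0 f z + snd v * pd 1 f z) \<le> B0 + B1"
        using onorm_lin2[of "pd 0 f z" "pd 1 f z"] B0 B1 z by fastforce
    qed
  qed
  then show ?thesis by (auto simp: dist_norm)
qed

lemma smooth_bdd:
  assumes "\<rho> > 0" "sm (Suc n) (ball a \<rho>) f" "f a = 0"
  shows "bdd n (ball a (\<rho>/2) - {a}) a 1 f"
proof (rule bdd_of_pds)
  fix "is" :: "nat list" assume len: "length is \<le> n"
  let ?K = "cball a (\<rho>/2)"
  have K: "?K \<subseteq> ball a \<rho>" "compact ?K" "convex ?K" using assms(1) by auto
  show "\<exists>M. \<forall>z\<in>ball a (\<rho>/2) - {a}. \<bar>pds is f z\<bar> \<le> M * dist z a powr (1 - real (length is))"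
  proof (cases "is")
    case Nil
    have "sm (Suc 0) (ball a \<rho>) f" by (rule sm_le[OF _ assms(2)]) simp
    then obtain L where L: "\<forall>x\<in>?K. \<forall>y\<in>?K. \<bar>f x - f y\<bar> \<le> L * dist x y"
      using lipschitz_sm[OF _ K(3,2,1)] by blast
    have "\<forall>z\<in>ball a (\<rho>/2) - {a}. \<bar>pds is f z\<bar> \<le> L * dist z a powr (1 - real (length is))"
    proof
      fix z assume "z \<in> ball a (\<rho>/2) - {a}"
      then have "z \<in> ?K" "a \<in> ?K" using assms(1) by auto
      then show "\<bar>pds is f z\<bar> \<le> L * dist z a powr (1 - real (length is))" using L assms(3) Nil by fastforce
    qed
    then show ?thesis by blast
  next
    case (Cons i js)
    have "sm (Suc n - length is) (ball a \<rho>) (pds is f)" using sm_pds[OF assms(2)] len by simp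
    then have "continuous_on ?K (pds is f)" using sm_cont K(1) by blast
    then obtain B where B: "\<forall>z\<in>?K. \<bar>pds is f z\<bar> \<le> B" using bound_compact[OF K(2)] by blast
    let ?M = "max B 0 * (\<rho>/2) powr (real (length is) - 1)"
    have "\<forall>z\<in>ball a (\<rho>/2) - {a}. \<bar>pds is f z\<bar> \<le> ?M * dist z a powr (1 - real (length is))"
    proof
      fix z assume z: "z \<in> ball a (\<rho>/2) - {a}"
      then have d: "0 < dist z a" "dist z a \<le> \<rho>/2" by (auto simp: dist_commute)
      have "(\<rho>/2) powr (1 - real (length is)) \<le> dist z a powr (1 - real (length is))"
        by (rule powr_mono2'[OF _ d]) (use Cons in simp)
      then have "max B 0 * ((\<rho>/2) powr (real (length is) - 1) * (\<rho>/2) powr (1 - real (length is)))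
          \<le> max B 0 * ((\<rho>/2) powr (real (length is) - 1) * dist z a powr (1 - real (length is)))"
        by (intro mult_left_mono) auto
      moreover have "(\<rho>/2) powr (real (length is) - 1) * (\<rho>/2) powr (1 - real (length is)) = 1"
        using assms(1) by (simp add: powr_add[symmetric])
      ultimately have "max B 0 \<le> ?M * dist z a powr (1 - real (length is))" by (simp add: mult.assoc)
      moreover have "\<bar>pds is f z\<bar> \<le> B" using B z by auto
      ultimately show "\<bar>pds is f z\<bar> \<le> ?M * dist z a powr (1 - real (length is))" by linarith
    qed
    then show ?thesis by blast
  qed
qed


lemma chain2:
  assumes dH: "\<And>z. (H has_derivative (\<lambda>v. fst v * Hu z + snd v * Hw z)) (at z)"
    and g1: "(g1 has_real_derivative d1) (at t)" and g2: "(g2 has_real_derivative d2) (at t)"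
  shows "((\<lambda>t. H (g1 t, g2 t)) has_real_derivative (d1 * Hu (g1 t, g2 t) + d2 * Hw (g1 t, g2 t))) (at t)"
proof -
  have P: "((\<lambda>t. (g1 t, g2 t)) has_derivative (\<lambda>h. (d1 * h, d2 * h))) (at t)"
    by (rule has_derivative_Pair[OF has_field_derivative_imp_has_derivative[OF g1] has_field_derivative_imp_has_derivative[OF g2]])
  have "((H \<circ> (\<lambda>t. (g1 t, g2 t))) has_derivative ((\<lambda>v. fst v * Hu (g1 t, g2 t) + snd v * Hw (g1 t, g2 t)) \<circ> (\<lambda>h. (d1 * h, d2 * h)))) (at t)"
    by (rule diff_chain_at[OF P dH])
  then have "((\<lambda>t. H (g1 t, g2 t)) has_derivative (\<lambda>h. d1 * h * Hu (g1 t, g2 t) + d2 * h * Hw (g1 t, g2 t))) (at t)"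
    by (simp add: o_def)
  then show ?thesis unfolding has_field_derivative_def
    by (rule has_derivative_eq_rhs) (simp add: fun_eq_iff algebra_simps)
qed

lemma alg_dx:
  fixes x w y h hu hw q qu qw :: real
  assumes "x \<noteq> 0" "q \<noteq> 0" "y = x * w"
  shows "((1 * hu + (- (y / x\<^sup>2)) * hw) * (x ^ s * q ^ n) - h * (of_nat s * (1 * x ^ (s - Suc 0)) * q ^ n + of_nat n * ((1 * qu + (- (y / x\<^sup>2)) * qw) * q ^ (n - Suc 0)) * x ^ s))
     / ((x ^ s * q ^ n) * (x ^ s * q ^ n))
   = ((- real s * h + x * hu - w * hw) * q - real n * h * (x * qu - w * qw)) / (x ^ Suc s * q ^ Suc n)"
  using assms by (cases s; cases n) (simp_all add: field_simps power2_eq_square)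

lemma alg_dy:
  fixes x w h hu hw q qu qw :: real
  assumes "x \<noteq> 0" "q \<noteq> 0"
  shows "((0 * hu + (1 / x) * hw) * (x ^ s * q ^ n) - h * (0 * q ^ n + of_nat n * ((0 * qu + (1 / x) * qw) * q ^ (n - Suc 0)) * x ^ s))
     / ((x ^ s * q ^ n) * (x ^ s * q ^ n))
   = (hw * q - real n * h * qw) / (x ^ Suc s * q ^ Suc n)"
  using assms by (cases n) (simp_all add: field_simps power2_eq_square)


lemma dx_deriv:
  assumes dH: "\<And>z. (H has_derivative (\<lambda>v. fst v * Hu z + snd v * Hw z)) (at z)"
    and dQ: "\<And>z. (Q has_derivative (\<lambda>v. fst v * Qu z + snd v * Qw z)) (at z)"
    and x: "x \<noteq> 0" and q: "Q (x, y/x) \<noteq> 0"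
  shows "((\<lambda>t. H (t, y/t) / (t^s * Q (t, y/t)^n)) has_real_derivative
    (((- real s * H (x, y/x) + x * Hu (x,y/x) - (y/x) * Hw (x,y/x)) * Q (x,y/x) - real n * H (x,y/x) * (x * Qu (x,y/x) - (y/x) * Qw (x,y/x)))
      / (x^(Suc s) * Q (x, y/x)^(Suc n)))) (at x)"
proof -
  have g2: "((\<lambda>t. y / t) has_real_derivative (- (y / x\<^sup>2))) (at x)"
    using DERIV_divide[OF DERIV_const[of y] DERIV_ident, of x UNIV] x by (simp add: power2_eq_square)
  have hH: "((\<lambda>t. H (t, y/t)) has_real_derivative (1 * Hu (x, y/x) + (- (y / x\<^sup>2)) * Hw (x, y/x))) (at x)"
    by (rule chain2[OF dH DERIV_ident g2])
  have hQ: "((\<lambda>t. Q (t, y/t)) has_real_derivative (1 * Qu (x, y/x) + (- (y / x\<^sup>2)) * Qw (x, y/x))) (at x)"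
    by (rule chain2[OF dQ DERIV_ident g2])
  have hD: "((\<lambda>t. t^s * Q (t, y/t)^n) has_real_derivative (of_nat s * (1 * x ^ (s - Suc 0)) * Q (x, y/x) ^ n
      + of_nat n * ((1 * Qu (x, y/x) + (- (y / x\<^sup>2)) * Qw (x, y/x)) * Q (x, y/x) ^ (n - Suc 0)) * x ^ s)) (at x)"
    by (rule DERIV_mult[OF DERIV_power[OF DERIV_ident] DERIV_power[OF hQ]])
  have den: "x^s * Q (x, y/x)^n \<noteq> 0" using x q by simp
  show ?thesis
    by (rule DERIV_cong[OF DERIV_divide[OF hH hD den]]) (rule alg_dx, use x q in simp_all)
qed

lemma dy_deriv:
  assumes dH: "\<And>z. (H has_derivative (\<lambda>v. fst v * Hu z + snd v * Hw z)) (at z)"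
    and dQ: "\<And>z. (Q has_derivative (\<lambda>v. fst v * Qu z + snd v * Qw z)) (at z)"
    and x: "x \<noteq> 0" and q: "Q (x, y/x) \<noteq> 0"
  shows "((\<lambda>t. H (x, t/x) / (x^s * Q (x, t/x)^n)) has_real_derivative
    ((Hw (x, y/x) * Q (x, y/x) - real n * H (x, y/x) * Qw (x, y/x)) / (x^(Suc s) * Q (x, y/x)^(Suc n)))) (at y)"
proof -
  have g2: "((\<lambda>t. t / x) has_real_derivative (1 / x)) (at y)"
    by (rule DERIV_cong[OF DERIV_cdivide[OF DERIV_ident]]) simp
  have hH: "((\<lambda>t. H (x, t/x)) has_real_derivative (0 * Hu (x, y/x) + (1 / x) * Hw (x, y/x))) (at y)"
    by (rule chain2[OF dH DERIV_const g2])
  have hQ: "((\<lambda>t. Q (x, t/x)) has_real_derivative (0 * Qu (x, y/x) + (1 / x) * Qw (x, y/x))) (at y)"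
    by (rule chain2[OF dQ DERIV_const g2])
  have hD: "((\<lambda>t. x^s * Q (x, t/x)^n) has_real_derivative (0 * Q (x, y/x) ^ n
      + of_nat n * ((0 * Qu (x, y/x) + (1 / x) * Qw (x, y/x)) * Q (x, y/x) ^ (n - Suc 0)) * x ^ s)) (at y)"
    by (rule DERIV_mult[OF DERIV_const DERIV_power[OF hQ]])
  have den: "x^s * Q (x, y/x)^n \<noteq> 0" using x q by simp
  show ?thesis
    by (rule DERIV_cong[OF DERIV_divide[OF hH hD den]]) (rule alg_dy, use x q in simp_all)
qed


lemma dist_0snd: "dist (0::real, v) (0, snd p) \<le> dist (0, v) p"
proof (cases p)
  case (Pair u w)
  have "sqrt ((dist 0 0)\<^sup>2 + (dist v w)\<^sup>2) \<le> sqrt ((dist 0 u)\<^sup>2 + (dist v w)\<^sup>2)"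
    by (rule real_sqrt_le_mono) simp
  then show ?thesis using Pair by (simp add: dist_Pair_Pair)
qed

lemma dist_fst0: "dist p (0::real, snd p) = \<bar>fst p\<bar>"
  by (cases p) (simp add: dist_Pair_Pair dist_real_def)

lemma chart_local:
  fixes f :: "real \<times> real \<Rightarrow> real"
  assumes f0: "f (0,0) = 0" and P: "poly2 P" and Q: "poly2 Q" and N: "open N" "(0,v) \<in> N" "Q (0,v) \<noteq> 0"
    and rep: "\<And>p. p \<in> N \<Longrightarrow> f (fst p, fst p * snd p) = P p / Q p"
  shows "\<exists>\<delta>>0. \<forall>is. \<exists>M. \<forall>x y. x \<noteq> 0 \<longrightarrow> (x, y/x) \<in> ball (0,v) \<delta> \<longrightarrow>
           \<bar>pds is f (x,y)\<bar> \<le> M * \<bar>x\<bar> powr (1 - real (length is))"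
proof -
  have "open (N \<inter> {p. Q p \<noteq> 0})"
    by (intro open_Int N(1) open_Collect_neq poly2_continuous[OF Q] continuous_on_const)
  then obtain \<epsilon> where \<epsilon>: "\<epsilon> > 0" "ball (0,v) \<epsilon> \<subseteq> N \<inter> {p. Q p \<noteq> 0}"
    using N(2,3) unfolding open_contains_ball by blast
  define N' where "N' = ball (0::real,v) \<epsilon>"
  have N'sub: "\<And>p. p \<in> N' \<Longrightarrow> p \<in> N \<and> Q p \<noteq> 0" using \<epsilon>(2) N'_def by blast
  define W where "W = {z::real\<times>real. fst z \<noteq> 0 \<and> (fst z, snd z / fst z) \<in> N'}"
  have oW: "open W"
  proof -
    let ?S = "{z::real\<times>real. fst z \<noteq> 0}"
    have oS: "open ?S" by (intro open_Collect_neq continuous_on_fst continuous_on_id continuous_on_const)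
    have "continuous_on ?S (\<lambda>z. (fst z, snd z / fst z))"
      by (intro continuous_on_Pair continuous_on_fst continuous_on_snd continuous_on_id continuous_on_divide) auto
    moreover have "open N'" by (simp add: N'_def)
    ultimately have "open ((\<lambda>z. (fst z, snd z / fst z)) -` N' \<inter> ?S)"
      using continuous_on_open_vimage[OF oS] by blast
    moreover have "(\<lambda>z. (fst z, snd z / fst z)) -` N' \<inter> ?S = W" by (auto simp: W_def)
    ultimately show ?thesis by simp
  qed
  have claim: "\<exists>H n. poly2 H \<and> (\<forall>w. (0,w) \<in> N' \<longrightarrow> H (0,w) = 0) \<and>
     (\<forall>z\<in>W. pds is f z = H (fst z, snd z / fst z) / (fst z ^ length is * Q (fst z, snd z / fst z) ^ n))" for "is"
  proof (induction "is")
    case Nil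
    have "\<forall>w. (0,w) \<in> N' \<longrightarrow> P (0,w) = 0"
    proof (intro allI impI)
      fix w assume "(0::real,w) \<in> N'"
      then have "(0,w) \<in> N" "Q (0,w) \<noteq> 0" using N'sub by auto
      then show "P (0,w) = 0" using rep[of "(0,w)"] f0 by simp
    qed
    moreover have "\<forall>z\<in>W. pds [] f z = P (fst z, snd z / fst z) / (fst z ^ length [] * Q (fst z, snd z / fst z) ^ 1)"
    proof
      fix z assume "z \<in> W"
      then have "fst z \<noteq> 0" "(fst z, snd z / fst z) \<in> N" using N'sub W_def by auto
      then show "pds [] f z = P (fst z, snd z / fst z) / (fst z ^ length [] * Q (fst z, snd z / fst z) ^ 1)"
        using rep[of "(fst z, snd z / fst z)"] by simp
    qed
    ultimately show ?case using P by blast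
  next
    case (Cons i "is")
    then obtain H n where IH: "poly2 H" "\<forall>w. (0,w) \<in> N' \<longrightarrow> H (0,w) = 0"
      "\<forall>z\<in>W. pds is f z = H (fst z, snd z / fst z) / (fst z ^ length is * Q (fst z, snd z / fst z) ^ n)" by blast
    obtain Hu Hw where dH: "poly2 Hu" "poly2 Hw" "\<And>z. (H has_derivative (\<lambda>v. fst v * Hu z + snd v * Hw z)) (at z)"
      using poly2_deriv[OF IH(1)] by blast
    obtain Qu Qw where dQ: "poly2 Qu" "poly2 Qw" "\<And>z. (Q has_derivative (\<lambda>v. fst v * Qu z + snd v * Qw z)) (at z)"
      using poly2_deriv[OF Q] by blast
    have Hw0: "Hw (0,w) = 0" if "(0,w) \<in> N'" for w
    proof -
      have d1: "((\<lambda>t. H (0, t)) has_real_derivative Hw (0,w)) (at w)"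
        using frechet_partials(2)[OF dH(3)[of "(0,w)"]] by simp
      have o: "open {t. (0, t) \<in> N'}" using open_slice2[of N' 0] N'_def by simp
      have d2: "((\<lambda>t. H (0, t)) has_real_derivative 0) (at w)"
        by (rule has_field_derivative_transform_within_open[OF DERIV_const o]) (use that IH(2) in auto)
      show ?thesis using DERIV_unique[OF d1 d2] .
    qed
    define s where "s = length is"
    define R where "R = (\<lambda>z. H (fst z, snd z / fst z) / (fst z ^ s * Q (fst z, snd z / fst z) ^ n))"
    have pdsR: "pds (i # is) f z = pd i R z" if "z \<in> W" for z
    proof -
      have "pd i (pds is f) z = pd i R z"
        by (rule pd_local[OF oW that]) (use IH(3) in \<open>simp add: R_def s_def\<close>)
      then show ?thesis by simp
    qed
    show ?case
    proof (cases "i = 0")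
      case True
      define H' where "H' = (\<lambda>p. (- real s * H p + fst p * Hu p - snd p * Hw p) * Q p - real n * H p * (fst p * Qu p - snd p * Qw p))"
      have pH': "poly2 H'" unfolding H'_def
        by (intro poly2_diff poly2.padd poly2.pmult poly2.pconst poly2.pfst poly2.psnd IH(1) dH(1,2) dQ(1,2) Q)
      have z0: "\<forall>w. (0,w) \<in> N' \<longrightarrow> H' (0,w) = 0" using IH(2) Hw0 by (simp add: H'_def)
      have "pds (i # is) f z = H' (fst z, snd z / fst z) / (fst z ^ length (i # is) * Q (fst z, snd z / fst z) ^ (Suc n))"
        if "z \<in> W" for z
      proof -
        obtain x y where z: "z = (x,y)" by (cases z)
        have x: "x \<noteq> 0" and q: "Q (x, y/x) \<noteq> 0" using that N'sub W_def z by auto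
        have "pd 0 R z = deriv (\<lambda>t. H (t, y/t) / (t^s * Q (t, y/t)^n)) x" by (simp add: pd_def2 R_def z)
        also have "\<dots> = H' (x, y/x) / (x ^ Suc s * Q (x, y/x) ^ Suc n)"
          using DERIV_imp_deriv[OF dx_deriv[OF dH(3) dQ(3) x q, of s n]] by (simp add: H'_def)
        finally show ?thesis using pdsR[OF that] True z by (simp add: s_def)
      qed
      then show ?thesis using pH' z0 by blast
    next
      case False
      define H' where "H' = (\<lambda>p. Hw p * Q p - real n * H p * Qw p)"
      have pH': "poly2 H'" unfolding H'_def
        by (intro poly2_diff poly2.pmult poly2.pconst IH(1) dH(1,2) dQ(1,2) Q)
      have z0: "\<forall>w. (0,w) \<in> N' \<longrightarrow> H' (0,w) = 0" using IH(2) Hw0 by (simp add: H'_def)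
      have "pds (i # is) f z = H' (fst z, snd z / fst z) / (fst z ^ length (i # is) * Q (fst z, snd z / fst z) ^ (Suc n))"
        if "z \<in> W" for z
      proof -
        obtain x y where z: "z = (x,y)" by (cases z)
        have x: "x \<noteq> 0" and q: "Q (x, y/x) \<noteq> 0" using that N'sub W_def z by auto
        have "pd i R z = deriv (\<lambda>t. H (x, t/x) / (x^s * Q (x, t/x)^n)) y" using False by (simp add: pd_def2 R_def z)
        also have "\<dots> = H' (x, y/x) / (x ^ Suc s * Q (x, y/x) ^ Suc n)"
          using DERIV_imp_deriv[OF dy_deriv[OF dH(3) dQ(3) x q, of s n]] by (simp add: H'_def)
        finally show ?thesis using pdsR[OF that] z by (simp add: s_def)
      qed
      then show ?thesis using pH' z0 by blast
    qed
  qed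
  define \<delta> where "\<delta> = \<epsilon> / 2"
  have \<delta>: "\<delta> > 0" using \<epsilon> by (simp add: \<delta>_def)
  let ?K = "cball (0::real, v) \<delta>"
  have KN': "?K \<subseteq> N'" using \<epsilon> by (auto simp: N'_def \<delta>_def)
  have "\<forall>is. \<exists>M. \<forall>x y. x \<noteq> 0 \<longrightarrow> (x, y/x) \<in> ball (0,v) \<delta> \<longrightarrow>
           \<bar>pds is f (x,y)\<bar> \<le> M * \<bar>x\<bar> powr (1 - real (length is))"
  proof
    fix "is" :: "nat list"
    obtain H n where Hn: "poly2 H" "\<forall>w. (0,w) \<in> N' \<longrightarrow> H (0,w) = 0"
      "\<forall>z\<in>W. pds is f z = H (fst z, snd z / fst z) / (fst z ^ length is * Q (fst z, snd z / fst z) ^ n)"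
      using claim by blast
    obtain L where L: "\<forall>p\<in>?K. \<forall>p'\<in>?K. \<bar>H p - H p'\<bar> \<le> L * dist p p'"
      using lipschitz_sm[OF sm_poly[OF Hn(1)] convex_cball compact_cball subset_UNIV open_UNIV] by blast
    have HL: "\<bar>H p\<bar> \<le> L * \<bar>fst p\<bar>" if "p \<in> ?K" for p
    proof -
      have "(0, snd p) \<in> ?K" using that dist_0snd[of v p] by simp
      then have "H (0, snd p) = 0" using KN' Hn(2) by auto
      then show ?thesis using L that \<open>(0, snd p) \<in> ?K\<close> dist_fst0[of p] by fastforce
    qed
    have cQ: "continuous_on ?K (\<lambda>p. inverse (Q p))"
      by (rule continuous_on_inverse[OF poly2_continuous[OF Q]]) (use KN' N'sub in auto)
    obtain B where B: "\<forall>p\<in>?K. \<bar>inverse (Q p)\<bar> \<le> B" using bound_compact[OF compact_cball cQ] by blast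
    show "\<exists>M. \<forall>x y. x \<noteq> 0 \<longrightarrow> (x, y/x) \<in> ball (0,v) \<delta> \<longrightarrow>
           \<bar>pds is f (x,y)\<bar> \<le> M * \<bar>x\<bar> powr (1 - real (length is))"
    proof (intro exI[of _ "L * B ^ n"] allI impI)
      fix x y :: real assume x: "x \<noteq> 0" and p: "(x, y/x) \<in> ball (0,v) \<delta>"
      then have pK: "(x, y/x) \<in> ?K" by auto
      have zW: "(x,y) \<in> W" using pK KN' x W_def by auto
      have qn: "Q (x, y/x) \<noteq> 0" using pK KN' N'sub by auto
      let ?s = "length is"
      have a1: "\<bar>pds is f (x,y)\<bar> = \<bar>H (x,y/x)\<bar> * \<bar>inverse (Q (x,y/x))\<bar> ^ n / \<bar>x\<bar> ^ ?s"
        using Hn(3) zW x qn by (simp add: abs_mult abs_divide power_abs abs_inverse divide_inverse power_inverse mult_ac)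
      have a2: "\<bar>H (x,y/x)\<bar> * \<bar>inverse (Q (x,y/x))\<bar> ^ n / \<bar>x\<bar> ^ ?s \<le> (L * \<bar>x\<bar>) * B ^ n / \<bar>x\<bar> ^ ?s"
      proof (rule divide_right_mono)
        have h1: "\<bar>H (x,y/x)\<bar> \<le> L * \<bar>x\<bar>" using HL[OF pK] by simp
        have h2: "\<bar>inverse (Q (x,y/x))\<bar> ^ n \<le> B ^ n" using B pK by (intro power_mono) auto
        show "\<bar>H (x,y/x)\<bar> * \<bar>inverse (Q (x,y/x))\<bar> ^ n \<le> (L * \<bar>x\<bar>) * B ^ n"
          by (rule mult_mono[OF h1 h2]) (use h1 in auto)
      qed simp
      have a3: "(L * \<bar>x\<bar>) * B ^ n / \<bar>x\<bar> ^ ?s = (L * B ^ n) * \<bar>x\<bar> powr (1 - real ?s)"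
        using x by (simp add: powr_diff powr_realpow)
      show "\<bar>pds is f (x,y)\<bar> \<le> (L * B ^ n) * \<bar>x\<bar> powr (1 - real (length is))"
        using a1 a2 a3 by simp
    qed
  qed
  then show ?thesis using \<delta> by blast
qed


lemma fin_max:
  fixes g c :: "'b \<Rightarrow> real"
  assumes "finite T" "\<forall>G\<in>T. \<exists>M. \<forall>z\<in>A G. g z \<le> M * c z" "\<forall>z. 0 \<le> c z"
  shows "\<exists>M. \<forall>G\<in>T. \<forall>z\<in>A G. g z \<le> M * c z"
  using assms(1,2)
proof (induction T rule: finite_induct)
  case empty then show ?case by simp
next
  case (insert G F)
  obtain M1 where M1: "\<forall>z\<in>A G. g z \<le> M1 * c z" using insert.prems by auto
  obtain M2 where M2: "\<forall>G'\<in>F. \<forall>z\<in>A G'. g z \<le> M2 * c z" using insert by auto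
  have "\<forall>G'\<in>insert G F. \<forall>z\<in>A G'. g z \<le> max M1 M2 * c z"
  proof (intro ballI)
    fix G' z assume G': "G' \<in> insert G F" and z: "z \<in> A G'"
    have m1: "M1 * c z \<le> max M1 M2 * c z" "M2 * c z \<le> max M1 M2 * c z"
      using assms(3) by (auto intro: mult_right_mono)
    show "g z \<le> max M1 M2 * c z"
    proof (cases "G' = G")
      case True then show ?thesis using M1 z m1 by force
    next
      case False then have "G' \<in> F" using G' by auto
      then show ?thesis using M2 z m1 by force
    qed
  qed
  then show ?case by blast
qed

lemma chart_bound:
  fixes f :: "real \<times> real \<Rightarrow> real"
  assumes f0: "f (0,0) = 0"
    and reg: "\<And>v. \<exists>P Q N. poly2 P \<and> poly2 Q \<and> open N \<and> (0,v) \<in> N \<and> Q (0,v) \<noteq> 0 \<and>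
                (\<forall>p\<in>N. f (fst p, fst p * snd p) = P p / Q p)"
  shows "\<exists>\<rho>>0. \<forall>is. \<exists>M. \<forall>x y. x \<noteq> 0 \<longrightarrow> \<bar>y\<bar> \<le> \<bar>x\<bar> \<longrightarrow> \<bar>x\<bar> < \<rho> \<longrightarrow>
           \<bar>pds is f (x,y)\<bar> \<le> M * \<bar>x\<bar> powr (1 - real (length is))"
proof -
  define Prop where "Prop B \<longleftrightarrow> (\<forall>is. \<exists>M. \<forall>z\<in>{z. fst z \<noteq> 0 \<and> (fst z, snd z / fst z) \<in> B}.
      \<bar>pds is f z\<bar> \<le> M * \<bar>fst z\<bar> powr (1 - real (length is)))" for B
  have ex: "\<exists>\<delta>>0. Prop (ball (0,v) \<delta>)" for v
  proof -
    obtain P Q N where h: "poly2 P" "poly2 Q" "open N" "(0,v) \<in> N" "Q (0,v) \<noteq> 0"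
      "\<forall>p\<in>N. f (fst p, fst p * snd p) = P p / Q p" using reg[of v] by blast
    obtain \<delta> where \<delta>: "\<delta> > 0" "\<forall>is. \<exists>M. \<forall>x y. x \<noteq> 0 \<longrightarrow> (x, y/x) \<in> ball (0,v) \<delta> \<longrightarrow>
           \<bar>pds is f (x,y)\<bar> \<le> M * \<bar>x\<bar> powr (1 - real (length is))"
      using chart_local[of f P Q N v] f0 h by blast
    have "Prop (ball (0,v) \<delta>)" unfolding Prop_def
    proof
      fix "is" obtain M where M: "\<forall>x y. x \<noteq> 0 \<longrightarrow> (x, y/x) \<in> ball (0,v) \<delta> \<longrightarrow>
           \<bar>pds is f (x,y)\<bar> \<le> M * \<bar>x\<bar> powr (1 - real (length is))" using \<delta>(2) by blast
      show "\<exists>M. \<forall>z\<in>{z. fst z \<noteq> 0 \<and> (fst z, snd z / fst z) \<in> ball (0, v) \<delta>}.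
          \<bar>pds is f z\<bar> \<le> M * \<bar>fst z\<bar> powr (1 - real (length is))"
      proof (intro exI[of _ M] ballI)
        fix z assume "z \<in> {z. fst z \<noteq> 0 \<and> (fst z, snd z / fst z) \<in> ball (0, v) \<delta>}"
        then show "\<bar>pds is f z\<bar> \<le> M * \<bar>fst z\<bar> powr (1 - real (length is))"
          using M[rule_format, of "fst z" "snd z"] by simp
      qed
    qed
    then show ?thesis using \<delta>(1) by blast
  qed
  then obtain \<delta> where \<delta>: "\<And>v. \<delta> v > 0" "\<And>v. Prop (ball (0,v) (\<delta> v))" by metis
  define T where "T = (\<lambda>v. ball (0::real,v) (\<delta> v)) ` UNIV"
  define S where "S = (\<lambda>w. (0::real, w)) ` {-1..1::real}"
  have cS: "compact S" unfolding S_def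
    by (intro compact_continuous_image continuous_on_Pair continuous_on_const continuous_on_id compact_Icc)
  have ST: "S \<subseteq> \<Union>T"
  proof
    fix p assume "p \<in> S"
    then obtain w where "p = (0,w)" using S_def by auto
    then have "p \<in> ball (0,w) (\<delta> w)" using \<delta>(1)[of w] by simp
    then show "p \<in> \<Union>T" using T_def by blast
  qed
  have oT: "\<And>B. B \<in> T \<Longrightarrow> open B" using T_def by auto
  obtain T' where T': "T' \<subseteq> T" "finite T'" "S \<subseteq> \<Union>T'" using compactE[OF cS ST oT] by metis
  obtain e where e: "e > 0" "\<And>x. x \<in> S \<Longrightarrow> \<exists>G\<in>T'. ball x e \<subseteq> G"
    using Heine_Borel_lemma[OF cS T'(3)] T'(1) oT by (metis subsetD)
  have PT': "\<forall>G\<in>T'. Prop G" using T'(1) \<delta>(2) T_def by auto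
  have "\<forall>is. \<exists>M. \<forall>x y. x \<noteq> 0 \<longrightarrow> \<bar>y\<bar> \<le> \<bar>x\<bar> \<longrightarrow> \<bar>x\<bar> < e \<longrightarrow>
           \<bar>pds is f (x,y)\<bar> \<le> M * \<bar>x\<bar> powr (1 - real (length is))"
  proof
    fix "is" :: "nat list"
    have "\<exists>M. \<forall>G\<in>T'. \<forall>z\<in>{z. fst z \<noteq> 0 \<and> (fst z, snd z / fst z) \<in> G}.
        \<bar>pds is f z\<bar> \<le> M * \<bar>fst z\<bar> powr (1 - real (length is))"
      by (rule fin_max[OF T'(2)]) (use PT' Prop_def in auto)
    then obtain M where M: "\<forall>G\<in>T'. \<forall>z\<in>{z. fst z \<noteq> 0 \<and> (fst z, snd z / fst z) \<in> G}.
        \<bar>pds is f z\<bar> \<le> M * \<bar>fst z\<bar> powr (1 - real (length is))" by blast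
    show "\<exists>M. \<forall>x y. x \<noteq> 0 \<longrightarrow> \<bar>y\<bar> \<le> \<bar>x\<bar> \<longrightarrow> \<bar>x\<bar> < e \<longrightarrow>
           \<bar>pds is f (x,y)\<bar> \<le> M * \<bar>x\<bar> powr (1 - real (length is))"
    proof (intro exI[of _ M] allI impI)
      fix x y :: real assume xy: "x \<noteq> 0" "\<bar>y\<bar> \<le> \<bar>x\<bar>" "\<bar>x\<bar> < e"
      have "\<bar>y / x\<bar> \<le> 1" using xy by (simp add: abs_divide divide_le_eq_1)
      then have "y / x \<in> {-1..1}" using abs_le_iff[of "y/x" 1] by (simp only: atLeastAtMost_iff) linarith
      then have "(0, y/x) \<in> S" unfolding S_def by (rule imageI)
      then obtain G where G: "G \<in> T'" "ball (0, y/x) e \<subseteq> G" using e(2) by blast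
      have "(x, y/x) \<in> ball (0, y/x) e" using xy by (simp add: dist_Pair_Pair dist_real_def)
      then have "(x, y/x) \<in> G" using G by blast
      then show "\<bar>pds is f (x,y)\<bar> \<le> M * \<bar>x\<bar> powr (1 - real (length is))"
        using M G(1) xy(1) by fastforce
    qed
  qed
  then show ?thesis using e(1) by blast
qed


lemma sm_subset: "sm n W h \<Longrightarrow> W' \<subseteq> W \<Longrightarrow> sm n W' h"
proof (induction n arbitrary: h)
  case 0 then show ?case by auto
next
  case (Suc n)
  from Suc.prems(1) have a: "sm 0 W h" "sm n W (pd 0 h)" "sm n W (pd 1 h)" by simp_all
  have "sm 0 W' h" using a(1) Suc.prems(2) by auto
  then show ?case using Suc.IH[OF a(2) Suc.prems(2)] Suc.IH[OF a(3) Suc.prems(2)] by simp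
qed

lemma dist_cmp:
  fixes z a :: "real \<times> real"
  shows "\<bar>fst z - fst a\<bar> \<le> dist z a" "\<bar>snd z - snd a\<bar> \<le> dist z a"
    "dist z a \<le> \<bar>fst z - fst a\<bar> + \<bar>snd z - snd a\<bar>"
proof -
  have d: "dist z a = sqrt ((fst z - fst a)\<^sup>2 + (snd z - snd a)\<^sup>2)"
    by (cases z, cases a) (simp add: dist_Pair_Pair dist_real_def power2_abs)
  have "sqrt ((fst z - fst a)\<^sup>2) \<le> sqrt ((fst z - fst a)\<^sup>2 + (snd z - snd a)\<^sup>2)"
    by (rule real_sqrt_le_mono) simp
  then show "\<bar>fst z - fst a\<bar> \<le> dist z a" using d by simp
  have "sqrt ((snd z - snd a)\<^sup>2) \<le> sqrt ((fst z - fst a)\<^sup>2 + (snd z - snd a)\<^sup>2)"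
    by (rule real_sqrt_le_mono) simp
  then show "\<bar>snd z - snd a\<bar> \<le> dist z a" using d by simp
  have "sqrt ((fst z - fst a)\<^sup>2 + (snd z - snd a)\<^sup>2) \<le> sqrt ((\<bar>fst z - fst a\<bar> + \<bar>snd z - snd a\<bar>)\<^sup>2)"
    by (rule real_sqrt_le_mono) (simp add: power2_eq_square algebra_simps)
  then show "dist z a \<le> \<bar>fst z - fst a\<bar> + \<bar>snd z - snd a\<bar>" using d by simp
qed

lemma powr_cmp:
  fixes u r s :: real
  assumes "0 < u" "u \<le> r" "r \<le> 2 * u" "s \<ge> 0"
  shows "u powr (1 - s) \<le> 2 powr s * r powr (1 - s)"
proof (cases "1 - s \<ge> 0")
  case True
  have "u powr (1 - s) \<le> r powr (1 - s)" by (rule powr_mono2) (use True assms in auto)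
  also have "\<dots> \<le> 2 powr s * r powr (1 - s)"
  proof -
    have "1 \<le> 2 powr s" using ge_one_powr_ge_zero[of 2 s] assms(4) by simp
    from mult_right_mono[OF this, of "r powr (1 - s)"] show ?thesis by simp
  qed
  finally show ?thesis .
next
  case False
  have "u powr (1 - s) \<le> (r / 2) powr (1 - s)" by (rule powr_mono2') (use False assms in auto)
  also have "\<dots> = r powr (1 - s) / 2 powr (1 - s)" by (rule powr_divide)
  also have "\<dots> = 2 powr (s - 1) * r powr (1 - s)"
    by (simp add: powr_minus_divide[symmetric] divide_inverse mult.commute flip: powr_minus)
  also have "\<dots> \<le> 2 powr s * r powr (1 - s)"
    by (intro mult_right_mono powr_mono) auto
  finally show ?thesis .
qed

lemma regular_poly2:
  assumes "regular_at g z"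
  shows "\<exists>P Q N. poly2 P \<and> poly2 Q \<and> open N \<and> z \<in> N \<and> Q z \<noteq> 0 \<and> (\<forall>p\<in>N. g p = P p / Q p)"
  using assms polyfun2_poly2 unfolding regular_at_def by blast

lemma open_swap_vimage: "open U \<Longrightarrow> open {p::real\<times>real. (snd p, fst p) \<in> U}"
proof -
  assume U: "open U"
  have c: "continuous_on UNIV (\<lambda>p::real\<times>real. (snd p, fst p))"
    by (intro continuous_on_Pair continuous_on_snd continuous_on_fst continuous_on_id)
  have "open ((\<lambda>p::real\<times>real. (snd p, fst p)) -` U)" by (rule continuous_imp_open_vimage[OF c open_UNIV U]) simp
  then show ?thesis unfolding vimage_def .
qed

lemma local_good:
  assumes reg: "regulous0_1 f" and fa: "f a = 0"
  shows "\<exists>\<rho>>0. sm k (ball a \<rho> - {a}) f \<and> bdd k (ball a \<rho> - {a}) a 1 f"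
proof -
  obtain C where C: "finite C" "\<And>z. z \<notin> C \<Longrightarrow> regular_at f z"
    "\<And>c. c \<in> C \<Longrightarrow> (\<forall>v. regular_at (\<lambda>(u, w). f (fst c + u, snd c + u * w)) (0, v)) \<and>
            (\<forall>u. regular_at (\<lambda>(w, v). f (fst c + w * v, snd c + v)) (u, 0))"
    using reg unfolding regulous0_1_def by blast
  obtain \<rho>0 where \<rho>0: "\<rho>0 > 0" "\<forall>x\<in>C. x \<noteq> a \<longrightarrow> \<rho>0 \<le> dist a x" using finite_set_avoid[OF C(1)] by blast
  have notC: "z \<notin> C" if "z \<in> ball a \<rho>0 - {a}" for z using that \<rho>0(2) by force
  have smV: "sm (Suc k) (ball a \<rho>0 - {a}) f"
  proof (rule sm_cover)
    fix z assume "z \<in> ball a \<rho>0 - {a}"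
    then show "\<exists>W'. open W' \<and> z \<in> W' \<and> sm (Suc k) W' f" by (rule regular_sm[OF C(2)[OF notC]])
  qed
  show ?thesis
  proof (cases "a \<in> C")
    case False
    have S: "sm (Suc k) (ball a \<rho>0) f"
    proof (rule sm_cover)
      fix z assume z: "z \<in> ball a \<rho>0"
      have "z \<notin> C"
      proof (cases "z = a")
        case True then show ?thesis using False by simp
      next
        case False then show ?thesis using notC z by blast
      qed
      then show "\<exists>W'. open W' \<and> z \<in> W' \<and> sm (Suc k) W' f" by (rule regular_sm[OF C(2)])
    qed
    have "bdd k (ball a (\<rho>0/2) - {a}) a 1 f" by (rule smooth_bdd[OF \<rho>0(1) S fa])
    moreover have "sm k (ball a (\<rho>0/2) - {a}) f"
      by (rule sm_subset[OF sm_mono[OF smV]]) (intro Diff_mono subset_ball, use \<rho>0(1) in auto)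
    ultimately show ?thesis using \<rho>0(1) by (intro exI[of _ "\<rho>0/2"]) auto
  next
    case True
    define f0 where "f0 = (\<lambda>z. f (fst z + fst a, snd z + snd a))"
    define f1 where "f1 = (\<lambda>z. f0 (snd z, fst z))"
    have f00: "f0 (0,0) = 0" using fa by (simp add: f0_def)
    have f10: "f1 (0,0) = 0" using fa by (simp add: f1_def f0_def)
    have reg0: "\<exists>P Q N. poly2 P \<and> poly2 Q \<and> open N \<and> (0,v) \<in> N \<and> Q (0,v) \<noteq> 0 \<and>
                (\<forall>p\<in>N. f0 (fst p, fst p * snd p) = P p / Q p)" for v
    proof -
      obtain P Q N where h: "poly2 P" "poly2 Q" "open N" "(0,v) \<in> N" "Q (0,v) \<noteq> 0"
        "\<forall>p\<in>N. (\<lambda>(u, w). f (fst a + u, snd a + u * w)) p = P p / Q p"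
        using regular_poly2[of "\<lambda>(u, w). f (fst a + u, snd a + u * w)" "(0,v)"] C(3)[OF True] by blast
      have "\<forall>p\<in>N. f0 (fst p, fst p * snd p) = P p / Q p"
      proof
        fix p assume "p \<in> N" then show "f0 (fst p, fst p * snd p) = P p / Q p"
          using h(6) by (cases p) (auto simp: f0_def add.commute)
      qed
      then show ?thesis using h by blast
    qed
    have reg1: "\<exists>P Q N. poly2 P \<and> poly2 Q \<and> open N \<and> (0,v) \<in> N \<and> Q (0,v) \<noteq> 0 \<and>
                (\<forall>p\<in>N. f1 (fst p, fst p * snd p) = P p / Q p)" for v
    proof -
      obtain P Q N where h: "poly2 P" "poly2 Q" "open N" "(v,0) \<in> N" "Q (v,0) \<noteq> 0"
        "\<forall>p\<in>N. (\<lambda>(w, v). f (fst a + w * v, snd a + v)) p = P p / Q p"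
        using regular_poly2[of "\<lambda>(w, v). f (fst a + w * v, snd a + v)" "(v,0)"] C(3)[OF True] by blast
      let ?N = "{p::real\<times>real. (snd p, fst p) \<in> N}"
      have "\<forall>p\<in>?N. f1 (fst p, fst p * snd p) = P (snd p, fst p) / Q (snd p, fst p)"
      proof
        fix p assume "p \<in> ?N" then show "f1 (fst p, fst p * snd p) = P (snd p, fst p) / Q (snd p, fst p)"
          using h(6) by (cases p) (auto simp: f1_def f0_def add.commute mult.commute)
      qed
      moreover have "poly2 (\<lambda>p. P (snd p, fst p))" "poly2 (\<lambda>p. Q (snd p, fst p))"
        using poly2_swap h(1,2) by auto
      moreover have "open ?N" using open_swap_vimage[OF h(3)] .
      ultimately show ?thesis using h(4,5) by (intro exI[of _ "\<lambda>p. P (snd p, fst p)"] exI[of _ "\<lambda>p. Q (snd p, fst p)"] exI[of _ ?N]) auto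
    qed
    obtain \<rho>1 where \<rho>1: "\<rho>1 > 0" "\<forall>is. \<exists>M. \<forall>x y. x \<noteq> 0 \<longrightarrow> \<bar>y\<bar> \<le> \<bar>x\<bar> \<longrightarrow> \<bar>x\<bar> < \<rho>1 \<longrightarrow>
           \<bar>pds is f0 (x,y)\<bar> \<le> M * \<bar>x\<bar> powr (1 - real (length is))"
      using chart_bound[of f0] f00 reg0 by blast
    obtain \<rho>2 where \<rho>2: "\<rho>2 > 0" "\<forall>is. \<exists>M. \<forall>x y. x \<noteq> 0 \<longrightarrow> \<bar>y\<bar> \<le> \<bar>x\<bar> \<longrightarrow> \<bar>x\<bar> < \<rho>2 \<longrightarrow>
           \<bar>pds is f1 (x,y)\<bar> \<le> M * \<bar>x\<bar> powr (1 - real (length is))"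
      using chart_bound[of f1] f10 reg1 by blast
    define \<rho> where "\<rho> = min \<rho>0 (min \<rho>1 \<rho>2)"
    have \<rho>: "\<rho> > 0" "\<rho> \<le> \<rho>0" "\<rho> \<le> \<rho>1" "\<rho> \<le> \<rho>2" using \<rho>0 \<rho>1 \<rho>2 by (auto simp: \<rho>_def)
    have "bdd k (ball a \<rho> - {a}) a 1 f"
    proof (rule bdd_of_pds)
      fix "is" :: "nat list" assume "length is \<le> k"
      let ?s = "real (length is)"
      obtain M1 where M1: "\<forall>x y. x \<noteq> 0 \<longrightarrow> \<bar>y\<bar> \<le> \<bar>x\<bar> \<longrightarrow> \<bar>x\<bar> < \<rho>1 \<longrightarrow>
           \<bar>pds is f0 (x,y)\<bar> \<le> M1 * \<bar>x\<bar> powr (1 - ?s)" using \<rho>1(2) by blast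
      obtain M2 where M2: "\<forall>x y. x \<noteq> 0 \<longrightarrow> \<bar>y\<bar> \<le> \<bar>x\<bar> \<longrightarrow> \<bar>x\<bar> < \<rho>2 \<longrightarrow>
           \<bar>pds (map sw is) f1 (x,y)\<bar> \<le> M2 * \<bar>x\<bar> powr (1 - ?s)"
        using \<rho>2(2)[rule_format, of "map sw is"] unfolding length_map by blast
      let ?M = "(\<bar>M1\<bar> + \<bar>M2\<bar>) * 2 powr ?s"
      show "\<exists>M. \<forall>z\<in>ball a \<rho> - {a}. \<bar>pds is f z\<bar> \<le> M * dist z a powr (1 - ?s)"
      proof (intro exI[of _ ?M] ballI)
        fix z assume z: "z \<in> ball a \<rho> - {a}"
        define x where "x = fst z - fst a"
        define y where "y = snd z - snd a"
        have r: "0 < dist z a" "dist z a < \<rho>" using z by (auto simp: dist_commute)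
        have dc: "\<bar>x\<bar> \<le> dist z a" "\<bar>y\<bar> \<le> dist z a" "dist z a \<le> \<bar>x\<bar> + \<bar>y\<bar>"
          using dist_cmp[of z a] by (auto simp: x_def y_def)
        have pe: "pds is f z = pds is f0 (x, y)"
          using pds_shift[of "is" f "fst a" "snd a" "(x,y)"] by (simp add: f0_def x_def y_def)
        have f0f1: "f0 = (\<lambda>z. f1 (snd z, fst z))" by (simp add: f1_def)
        have pe1: "pds is f0 (x, y) = pds (map sw is) f1 (y, x)"
          using pds_swap[of "is" f1 "(x,y)"] f0f1 by simp
        have sp: "0 \<le> dist z a powr (1 - ?s)" by simp
        show "\<bar>pds is f z\<bar> \<le> ?M * dist z a powr (1 - ?s)"
        proof (cases "\<bar>y\<bar> \<le> \<bar>x\<bar>")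
          case True
          then have x0: "x \<noteq> 0" using r dc by auto
          have "\<bar>pds is f z\<bar> \<le> M1 * \<bar>x\<bar> powr (1 - ?s)" using M1 x0 True dc r \<rho> pe by simp
          also have "\<dots> \<le> \<bar>M1\<bar> * \<bar>x\<bar> powr (1 - ?s)" by (intro mult_right_mono) auto
          also have "\<dots> \<le> \<bar>M1\<bar> * (2 powr ?s * dist z a powr (1 - ?s))"
            by (intro mult_left_mono powr_cmp) (use x0 dc True in auto)
          also have "\<dots> \<le> ?M * dist z a powr (1 - ?s)"
            using sp by (simp add: algebra_simps mult_right_mono)
          finally show ?thesis .
        next
          case False
          then have y0: "y \<noteq> 0" and le: "\<bar>x\<bar> \<le> \<bar>y\<bar>" by auto
          have "\<bar>pds is f z\<bar> \<le> M2 * \<bar>y\<bar> powr (1 - ?s)" using M2 y0 le dc r \<rho> pe pe1 by simp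
          also have "\<dots> \<le> \<bar>M2\<bar> * \<bar>y\<bar> powr (1 - ?s)" by (intro mult_right_mono) auto
          also have "\<dots> \<le> \<bar>M2\<bar> * (2 powr ?s * dist z a powr (1 - ?s))"
            by (intro mult_left_mono powr_cmp) (use y0 dc le in auto)
          also have "\<dots> \<le> ?M * dist z a powr (1 - ?s)"
            using sp by (simp add: algebra_simps mult_right_mono)
          finally show ?thesis .
        qed
      qed
    qed
    moreover have "sm k (ball a \<rho> - {a}) f"
      by (rule sm_subset[OF sm_mono[OF smV]]) (intro Diff_mono subset_ball, use \<rho> in auto)
    ultimately show ?thesis using \<rho>(1) by blast
  qed
qed

theorem corollary3p9:
  fixes k m :: nat and f :: "real \<times> real \<Rightarrow> real"
  assumes "k > 0" and "regulous0_1 f" and "m \<ge> 2 * k"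
  shows "kflat k (\<lambda>z. f z ^ m)"
  unfolding kflat_def
proof (intro allI impI)
  fix a assume "f a ^ m = 0"
  then have fa: "f a = 0" using assms(1,3) by simp
  obtain \<rho> where \<rho>: "\<rho> > 0" "sm k (ball a \<rho> - {a}) f" "bdd k (ball a \<rho> - {a}) a 1 f"
    using local_good[OF assms(2) fa] by blast
  let ?V = "ball a \<rho> - {a}"
  have oV: "open ?V" by (simp add: open_Diff)
  have aV: "a \<notin> ?V" by simp
  have "sm k ?V (\<lambda>z. f z ^ m)" by (rule sm_pow[OF oV \<rho>(2)])
  moreover have "bdd k ?V a (real m) (\<lambda>z. f z ^ m)" by (rule bdd_pow[OF oV aV \<rho>(2,3)])
  moreover have "real m \<ge> real k + 1" using assms(1,3) by simp
  ultimately have "Ck_on k (ball a \<rho>) (\<lambda>z. f z ^ m) \<and> (\<forall>is. length is \<le> k \<longrightarrow> pds is (\<lambda>z. f z ^ m) a = 0)"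
    using flat_from_bdd[OF \<rho>(1)] fa assms(1,3) by simp
  then show "kflat_at k (\<lambda>z. f z ^ m) a"
    unfolding kflat_at_def using \<rho>(1) by (intro conjI exI[of _ "ball a \<rho>"]) auto
qed

end
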